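(* Consider the general Hubbard model of the context, let $N_{\rm e}\le N_{\rm d}$, let $A\subset V$ with $|A|=N_{\rm e}$, decompose $A$ into its connected components $C_1,\dots,C_n$ (with respect to the connectivity defined in the context), and let $m_k\in\{-|C_k|/2,\,1-|C_k|/2,\dots,|C_k|/2\}$ for $k=1,\dots,n$. Then the state $$\Phi_{A,\{m_k\}}=\Big\{\prod_{k=1}^n(\hat S^-_k)^{|C_k|/2-m_k}\Big\}\prod_{u\in A}a^\dagger_{u\uparrow}\Phi_0$$ satisfies $H\Phi_{A,\{m_k\}}=N_{\rm e}\varepsilon_0\Phi_{A,\{m_k\}}$, and $N_{\rm e}\varepsilon_0$ is the ground state energy of $H$ in the subspace with electron number $N_{\rm e}$; in particular $\Phi_{A,\{m_k\}}$ is a ground state in that subspace.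
   Context: Let $\Lambda$ be a finite set, with fermion operators $c_{x\sigma},c^\dagger_{x\sigma}$ ($x\in\Lambda$, $\sigma\in\{\uparrow,\downarrow\}$) obeying the canonical anticommutation relations, vacuum $\Phi_0$, $n_{x\sigma}=c^\dagger_{x\sigma}c_{x\sigma}$, electron number operator $\hat N_{\rm e}=\sum_x(n_{x\uparrow}+n_{x\downarrow})$. The Hubbard Hamiltonian is $H=H_{\rm hop}+H_{\rm int}$, $H_{\rm hop}=\sum_{x,y\in\Lambda}\sum_\sigma t_{xy}c^\dagger_{x\sigma}c_{y\sigma}$, $H_{\rm int}=\sum_xU_xn_{x\uparrow}n_{x\downarrow}$, with $(t_{xy})$ real symmetric and all $U_x>0$. Let $\varepsilon_0$ be the smallest eigenvalue of $(t_{xy})$, $\mathcal H_0$ its eigenspace, $N_{\rm d}=\dim\mathcal H_0$, and $\{\varphi^{(u)}\}_{u\in V}$ a linearly independent basis of $\mathcal H_0$ indexed by a finite set $V$; $a^\dagger_{u\sigma}=\sum_x\varphi^{(u)}_xc^\dagger_{x\sigma}$. Two indices $u,v\in V$ are directly connected if $\varphi^{(u)}_x\varphi^{(v)}_x\neq0$ for some $x\in\Lambda$; connected components of a subset of $V$ are taken with respect to the graph of direct connections. For the components $C_1,\dots,C_n$ of $A$ let $\Lambda_k=\{x\in\Lambda:\varphi^{(u)}_x\ne0\text{ for some }u\in C_k\}$ (these are pairwise disjoint), $S^-_x=c^\dagger_{x\downarrow}c_{x\uparrow}$, and $\hat S^-_k=\sum_{x\in\Lambda_k}S^-_x$. *)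

theory Defs
  imports Complex_Main "HOL-Library.Product_Lexorder"
begin

text \<open>Fermionic Fock space over the modes (x, sigma), x in the finite lattice
 (a finite type 'x), sigma :: bool with True = spin up, False = spin down.
 A state is a complex function on the finite sets of occupied modes
 (occupation-number basis, modes ordered by the lexicographic order).\<close>

type_synonym 'x fock = "('x \<times> bool) set \<Rightarrow> complex"

abbreviation Up :: bool where "Up \<equiv> True"
abbreviation Down :: bool where "Down \<equiv> False"

definition fsign :: "('x::linorder \<times> bool) \<Rightarrow> ('x \<times> bool) set \<Rightarrow> complex" where
  "fsign m S = (-1) ^ card {m' \<in> S. m' < m}"

definition cre :: "('x::linorder \<times> bool) \<Rightarrow> 'x fock \<Rightarrow> 'x fock" where
  "cre m \<Psi> = (\<lambda>S. if m \<in> S then fsign m (S - {m}) * \<Psi> (S - {m}) else 0)"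

definition ann :: "('x::linorder \<times> bool) \<Rightarrow> 'x fock \<Rightarrow> 'x fock" where
  "ann m \<Psi> = (\<lambda>S. if m \<in> S then 0 else fsign m S * \<Psi> (insert m S))"

definition vac :: "'x fock" where
  "vac = (\<lambda>S. if S = {} then 1 else 0)"

definition numop :: "('x::linorder \<times> bool) \<Rightarrow> 'x fock \<Rightarrow> 'x fock" where
  "numop m \<Psi> = cre m (ann m \<Psi>)"

definition Nop :: "('x::{finite,linorder}) fock \<Rightarrow> 'x fock" where
  "Nop \<Psi> = (\<lambda>S. \<Sum>x\<in>UNIV. \<Sum>\<sigma>\<in>UNIV. numop (x, \<sigma>) \<Psi> S)"

definition Hhop :: "('x::{finite,linorder} \<Rightarrow> 'x \<Rightarrow> real) \<Rightarrow> 'x fock \<Rightarrow> 'x fock" where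
  "Hhop t \<Psi> = (\<lambda>S. \<Sum>x\<in>UNIV. \<Sum>y\<in>UNIV. \<Sum>\<sigma>\<in>UNIV.
      complex_of_real (t x y) * cre (x, \<sigma>) (ann (y, \<sigma>) \<Psi>) S)"

definition Hint :: "('x::{finite,linorder} \<Rightarrow> real) \<Rightarrow> 'x fock \<Rightarrow> 'x fock" where
  "Hint U \<Psi> = (\<lambda>S. \<Sum>x\<in>UNIV. complex_of_real (U x) * numop (x, Up) (numop (x, Down) \<Psi>) S)"

definition Ham :: "('x::{finite,linorder} \<Rightarrow> 'x \<Rightarrow> real) \<Rightarrow> ('x \<Rightarrow> real) \<Rightarrow> 'x fock \<Rightarrow> 'x fock" where
  "Ham t U \<Psi> = (\<lambda>S. Hhop t \<Psi> S + Hint U \<Psi> S)"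

definition eigspace :: "('x::finite \<Rightarrow> 'x \<Rightarrow> real) \<Rightarrow> real \<Rightarrow> ('x \<Rightarrow> real) set" where
  "eigspace t e = {v. \<forall>x. (\<Sum>y\<in>UNIV. t x y * v y) = e * v x}"

definition is_eigval :: "('x::finite \<Rightarrow> 'x \<Rightarrow> real) \<Rightarrow> real \<Rightarrow> bool" where
  "is_eigval t e \<longleftrightarrow> (\<exists>v\<in>eigspace t e. \<exists>x. v x \<noteq> 0)"

definition is_min_eigval :: "('x::finite \<Rightarrow> 'x \<Rightarrow> real) \<Rightarrow> real \<Rightarrow> bool" where
  "is_min_eigval t e \<longleftrightarrow> is_eigval t e \<and> (\<forall>e'. is_eigval t e' \<longrightarrow> e \<le> e')"

definition is_basis_of :: "('v::finite \<Rightarrow> 'x \<Rightarrow> real) \<Rightarrow> ('x \<Rightarrow> real) set \<Rightarrow> bool" where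
  "is_basis_of \<phi> W \<longleftrightarrow>
     (\<forall>u. \<phi> u \<in> W) \<and>
     (\<forall>c. (\<forall>x. (\<Sum>u\<in>UNIV. c u * \<phi> u x) = 0) \<longrightarrow> (\<forall>u. c u = 0)) \<and>
     (\<forall>v\<in>W. \<exists>c. \<forall>x. v x = (\<Sum>u\<in>UNIV. c u * \<phi> u x))"

definition dconn :: "('v \<Rightarrow> 'x \<Rightarrow> real) \<Rightarrow> 'v \<Rightarrow> 'v \<Rightarrow> bool" where
  "dconn \<phi> u v \<longleftrightarrow> (\<exists>x. \<phi> u x * \<phi> v x \<noteq> 0)"

definition components :: "('v \<Rightarrow> 'x \<Rightarrow> real) \<Rightarrow> 'v set \<Rightarrow> 'v set set" where
  "components \<phi> A =
     {{v \<in> A. (u, v) \<in> {(a, b). a \<in> A \<and> b \<in> A \<and> dconn \<phi> a b}\<^sup>*} | u. u \<in> A}"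

definition Lam :: "('v \<Rightarrow> 'x \<Rightarrow> real) \<Rightarrow> 'v set \<Rightarrow> 'x set" where
  "Lam \<phi> C = {x. \<exists>u\<in>C. \<phi> u x \<noteq> 0}"

definition adag :: "('v \<Rightarrow> 'x::{finite,linorder} \<Rightarrow> real) \<Rightarrow> 'v \<Rightarrow> bool \<Rightarrow> 'x fock \<Rightarrow> 'x fock" where
  "adag \<phi> u \<sigma> \<Psi> = (\<lambda>S. \<Sum>x\<in>UNIV. complex_of_real (\<phi> u x) * cre (x, \<sigma>) \<Psi> S)"

definition Sminus :: "'x::linorder \<Rightarrow> 'x fock \<Rightarrow> 'x fock" where
  "Sminus x \<Psi> = cre (x, Down) (ann (x, Up) \<Psi>)"

definition Sminus_set :: "'x::linorder set \<Rightarrow> 'x fock \<Rightarrow> 'x fock" where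
  "Sminus_set L \<Psi> = (\<lambda>S. \<Sum>x\<in>L. Sminus x \<Psi> S)"

definition PsiA :: "('v::linorder \<Rightarrow> 'x::{finite,linorder} \<Rightarrow> real) \<Rightarrow> 'v set \<Rightarrow> 'x fock" where
  "PsiA \<phi> A = foldr (\<lambda>u. adag \<phi> u Up) (sorted_list_of_set A) vac"

definition PhiAm :: "('v::linorder \<Rightarrow> 'x::{finite,linorder} \<Rightarrow> real) \<Rightarrow> 'v set
     \<Rightarrow> nat \<Rightarrow> (nat \<Rightarrow> 'v set) \<Rightarrow> (nat \<Rightarrow> real) \<Rightarrow> 'x fock" where
  "PhiAm \<phi> A n C m =
     foldr (\<lambda>k. Sminus_set (Lam \<phi> (C k)) ^^ nat \<lfloor>real (card (C k)) / 2 - m k\<rfloor>)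
       [0..<n] (PsiA \<phi> A)"

end

theory Submission
  imports Defs
begin

lemma fsign_sq: "fsign m S * fsign m S = 1"
  unfolding fsign_def by (simp flip: power_add)

lemma fsign_real: "cnj (fsign m S) = fsign m S"
  unfolding fsign_def by simp

lemma fsign_insert:
  fixes T :: "('x::{finite,linorder} \<times> bool) set"
  assumes "a \<notin> T"
  shows "fsign m (insert a T) = (if a < m then -1 else 1) * fsign m T"
proof -
  have "{m' \<in> insert a T. m' < m} = (if a < m then insert a {m' \<in> T. m' < m} else {m' \<in> T. m' < m})"
    by auto
  then show ?thesis using assms unfolding fsign_def by auto
qed

lemma fsign_remove:
  fixes T :: "('x::{finite,linorder} \<times> bool) set"
  assumes "a \<in> T"
  shows "fsign m T = (if a < m then -1 else 1) * fsign m (T - {a})"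
proof -
  have "T = insert a (T - {a})" using assms by auto
  then have "fsign m T = fsign m (insert a (T - {a}))" by simp
  also have "\<dots> = (if a < m then -1 else 1) * fsign m (T - {a})" by (rule fsign_insert) auto
  finally show ?thesis .
qed

lemma ann_cre:
  fixes m n :: "'x::{finite,linorder} \<times> bool"
  shows "ann n (cre m \<Psi>) S = (if n = m then \<Psi> S else 0) - cre m (ann n \<Psi>) S"
proof (cases "n = m")
  case True
  show ?thesis
  proof (cases "m \<in> S")
    case mS: True
    have "cre m (ann n \<Psi>) S = fsign m (S - {m}) * (fsign m (S - {m}) * \<Psi> (insert m (S - {m})))"
      unfolding cre_def ann_def using mS True by simp
    also have "insert m (S - {m}) = S" using mS by auto
    finally have "cre m (ann n \<Psi>) S = \<Psi> S" using fsign_sq[of m "S - {m}"] by (simp add: mult.assoc[symmetric])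
    moreover have "ann n (cre m \<Psi>) S = 0" unfolding ann_def using mS True by simp
    ultimately show ?thesis using True by simp
  next
    case mS: False
    have "ann n (cre m \<Psi>) S = fsign m S * (fsign m (insert m S - {m}) * \<Psi> (insert m S - {m}))"
      unfolding cre_def ann_def using mS True by simp
    also have "insert m S - {m} = S" using mS by auto
    finally have "ann n (cre m \<Psi>) S = \<Psi> S" using fsign_sq[of m S] by (simp add: mult.assoc[symmetric])
    moreover have "cre m (ann n \<Psi>) S = 0" unfolding cre_def using mS by simp
    ultimately show ?thesis using True by simp
  qed
next
  case False
  show ?thesis
  proof (cases "m \<in> S \<and> n \<notin> S")
    case True
    have e1: "insert n S - {m} = insert n (S - {m})" using False by auto
    have s1: "fsign n S = (if m < n then -1 else 1) * fsign n (S - {m})"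
      using True fsign_remove[of m S n] by simp
    have s2: "fsign m (insert n (S - {m})) = (if n < m then -1 else 1) * fsign m (S - {m})"
      using True by (intro fsign_insert) auto
    have l: "ann n (cre m \<Psi>) S = fsign n S * (fsign m (insert n (S - {m})) * \<Psi> (insert n (S - {m})))"
      unfolding cre_def ann_def using True False e1 by simp
    have r: "cre m (ann n \<Psi>) S = fsign m (S - {m}) * (fsign n (S - {m}) * \<Psi> (insert n (S - {m})))"
      unfolding cre_def ann_def using True False by simp
    have "m < n \<or> n < m" using False by auto
    then show ?thesis using False unfolding l r s1 s2 by auto
  next
    case F2: False
    have l: "ann n (cre m \<Psi>) S = 0" unfolding ann_def cre_def using F2 False by auto
    have r: "cre m (ann n \<Psi>) S = 0" unfolding ann_def cre_def using F2 False by auto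
    show ?thesis using False l r by simp
  qed
qed

lemma ann_ann:
  fixes m n :: "'x::{finite,linorder} \<times> bool"
  shows "ann n (ann m \<Psi>) S = - ann m (ann n \<Psi>) S"
proof (cases "n \<noteq> m \<and> n \<notin> S \<and> m \<notin> S")
  case True
  have s1: "fsign m (insert n S) = (if n < m then -1 else 1) * fsign m S"
    using True by (intro fsign_insert) auto
  have s2: "fsign n (insert m S) = (if m < n then -1 else 1) * fsign n S"
    using True by (intro fsign_insert) auto
  have "m < n \<or> n < m" using True by auto
  then show ?thesis unfolding ann_def using True by (auto simp: s1 s2 insert_commute)
next
  case False
  then show ?thesis unfolding ann_def by auto
qed

lemma numop_eq: "numop m \<Psi> S = (if m \<in> S then \<Psi> S else 0)"
  unfolding numop_def cre_def ann_def using fsign_sq[of m "S - {m}"]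
  by (auto simp: insert_absorb)

lemma Nop_eq:
  fixes \<Psi> :: "'x::{finite,linorder} fock"
  shows "Nop \<Psi> S = of_nat (card S) * \<Psi> S"
proof -
  have "Nop \<Psi> S = (\<Sum>x\<in>UNIV. \<Sum>\<sigma>\<in>UNIV. (if (x, \<sigma>) \<in> S then \<Psi> S else 0))"
    unfolding Nop_def numop_eq by simp
  also have "\<dots> = (\<Sum>p\<in>UNIV. (if p \<in> S then \<Psi> S else 0))"
    by (simp add: sum.cartesian_product UNIV_Times_UNIV[symmetric] del: UNIV_Times_UNIV)
  also have "\<dots> = (\<Sum>p\<in>S. \<Psi> S)"
    by (simp add: sum.If_cases)
  finally show ?thesis by simp
qed

lemma Hint_eq:
  fixes \<Psi> :: "'x::{finite,linorder} fock"
  shows "Hint U \<Psi> S = (\<Sum>x\<in>UNIV. complex_of_real (U x) * (if (x, Up) \<in> S \<and> (x, Down) \<in> S then \<Psi> S else 0))"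
  unfolding Hint_def numop_eq by (auto intro!: sum.cong)

lemma Sminus_eq:
  fixes x :: "'x::{finite,linorder}"
  shows "Sminus x \<Psi> S = (if (x, Down) \<in> S \<and> (x, Up) \<notin> S then \<Psi> (insert (x, Up) (S - {(x, Down)})) else 0)"
proof -
  have "{m' \<in> S - {(x, Down)}. m' < (x, Down)} = {m' \<in> S - {(x, Down)}. m' < (x, Up)}"
    by (auto simp: less_prod_def)
  then have "fsign (x, Down) (S - {(x, Down)}) = fsign (x, Up) (S - {(x, Down)})"
    unfolding fsign_def by simp
  then show ?thesis unfolding Sminus_def cre_def ann_def using fsign_sq[of "(x,Up)" "S - {(x, Down)}"]
    by auto
qed

lemma cre_lin:
  fixes I :: "'i set"
  shows "cre m (\<lambda>S'. \<Sum>i\<in>I. c i * f i S') S = (\<Sum>i\<in>I. c i * cre m (f i) S)"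
  unfolding cre_def by (auto simp: sum_distrib_left algebra_simps)

lemma ann_lin:
  fixes I :: "'i set"
  shows "ann m (\<lambda>S'. \<Sum>i\<in>I. c i * f i S') S = (\<Sum>i\<in>I. c i * ann m (f i) S)"
  unfolding ann_def by (auto simp: sum_distrib_left algebra_simps)

lemma cre_scale: "cre m (\<lambda>S'. c * f S') S = c * cre m f S"
  unfolding cre_def by auto

lemma ann_sum: "ann m (\<lambda>S'. \<Sum>i\<in>I. f i S') S = (\<Sum>i\<in>I. ann m (f i) S)"
  unfolding ann_def by (auto simp: sum_distrib_left)

lemma cre_sum: "cre m (\<lambda>S'. \<Sum>i\<in>I. f i S') S = (\<Sum>i\<in>I. cre m (f i) S)"
  unfolding cre_def by (auto simp: sum_distrib_left)



definition nodouble :: "('x \<times> bool) set \<Rightarrow> bool" where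
  "nodouble S \<longleftrightarrow> (\<forall>x. \<not> ((x, True) \<in> S \<and> (x, False) \<in> S))"

definition downs :: "('x \<times> bool) set \<Rightarrow> 'x set" where
  "downs S = {x. (x, False) \<in> S}"

definition upL :: "'x set \<Rightarrow> ('x \<times> bool) set \<Rightarrow> ('x \<times> bool) set" where
  "upL L S = (\<lambda>(x, b). (x, b \<or> x \<in> L)) ` S"

definition flip :: "'x \<Rightarrow> ('x \<times> bool) set \<Rightarrow> ('x \<times> bool) set" where
  "flip x S = insert (x, True) (S - {(x, False)})"

lemma mem_upL: "((x, b) \<in> upL L S) = (if x \<in> L then b \<and> ((x, True) \<in> S \<or> (x, False) \<in> S) else (x, b) \<in> S)"
proof
  assume "(x, b) \<in> upL L S"
  then obtain y c where yc: "(y, c) \<in> S" "(x, b) = (y, c \<or> y \<in> L)" unfolding upL_def by auto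
  then have "y = x" "b = (c \<or> x \<in> L)" by auto
  then show "if x \<in> L then b \<and> ((x, True) \<in> S \<or> (x, False) \<in> S) else (x, b) \<in> S"
    using yc(1) by (cases c) auto
next
  assume a: "if x \<in> L then b \<and> ((x, True) \<in> S \<or> (x, False) \<in> S) else (x, b) \<in> S"
  show "(x, b) \<in> upL L S"
  proof (cases "x \<in> L")
    case True
    then have b: "b" and "(x, True) \<in> S \<or> (x, False) \<in> S" using a by auto
    then obtain c where c: "(x, c) \<in> S" by blast
    have "(x, b) = (\<lambda>(x, b). (x, b \<or> x \<in> L)) (x, c)" using True b by simp
    then show ?thesis unfolding upL_def using c by (rule image_eqI)
  next
    case False
    then have c: "(x, b) \<in> S" using a by simp
    have "(x, b) = (\<lambda>(x, b). (x, b \<or> x \<in> L)) (x, b)" using False by simp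
    then show ?thesis unfolding upL_def using c by (rule image_eqI)
  qed
qed

lemma upL_id:
  assumes "downs S \<inter> L = {}" shows "upL L S = S"
proof -
  have "\<forall>x b. ((x, b) \<in> upL L S) = ((x, b) \<in> S)"
  proof (intro allI)
    fix x b show "((x, b) \<in> upL L S) = ((x, b) \<in> S)" using assms unfolding mem_upL downs_def by (cases b) auto
  qed
  then show ?thesis by (simp add: set_eq_iff split_paired_All)
qed

lemma upL_flip:
  assumes "x \<in> L" "(x, False) \<in> S" shows "upL L (flip x S) = upL L S"
proof -
  have "\<forall>y b. ((y, b) \<in> upL L (flip x S)) = ((y, b) \<in> upL L S)" using assms unfolding mem_upL flip_def by auto
  then show ?thesis by (simp add: set_eq_iff split_paired_All)
qed

lemma nodouble_flip: "nodouble S \<Longrightarrow> nodouble (flip x S)"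
  unfolding nodouble_def flip_def by auto

lemma not_nodouble_flip: "\<not> nodouble S \<Longrightarrow> (x, True) \<notin> S \<Longrightarrow> \<not> nodouble (flip x S)"
  unfolding nodouble_def flip_def by auto

lemma downs_flip: "downs (flip x S) = downs S - {x}"
  unfolding downs_def flip_def by auto

lemma nodouble_upL: "nodouble S \<Longrightarrow> nodouble (upL L S)"
  unfolding nodouble_def mem_upL by auto

lemma downs_upL: "downs (upL L S) = downs S - L"
  unfolding downs_def mem_upL by auto

lemma upL_upL_UNIV: "upL UNIV (upL L S) = upL UNIV S"
proof -
  have "\<forall>y b. ((y, b) \<in> upL UNIV (upL L S)) = ((y, b) \<in> upL UNIV S)" unfolding mem_upL by auto
  then show ?thesis by (simp add: set_eq_iff split_paired_All)
qed

lemma Sminus_set_eq: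
  fixes L :: "'x::{finite,linorder} set"
  shows "Sminus_set L \<Psi> S = (\<Sum>x\<in>L. if (x, Down) \<in> S \<and> (x, Up) \<notin> S then \<Psi> (flip x S) else 0)"
  unfolding Sminus_set_def Sminus_eq flip_def by simp

lemma pow_formula:
  fixes L :: "'x::{finite,linorder} set" and \<Psi> :: "'x fock"
  assumes hyp: "\<forall>S. \<Psi> S \<noteq> 0 \<longrightarrow> nodouble S \<and> downs S \<inter> L = {}"
  shows "(Sminus_set L ^^ j) \<Psi> S =
     (if nodouble S \<and> card (downs S \<inter> L) = j then of_nat (fact j) * \<Psi> (upL L S) else 0)"
proof (induction j arbitrary: S)
  case 0
  show ?case
  proof (cases "nodouble S \<and> downs S \<inter> L = {}")
    case True
    then show ?thesis by (simp add: upL_id)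
  next
    case False
    then have "\<Psi> S = 0" using hyp by blast
    then show ?thesis using False by auto
  qed
next
  case (Suc j)
  have "(Sminus_set L ^^ Suc j) \<Psi> S = Sminus_set L ((Sminus_set L ^^ j) \<Psi>) S" by simp
  also have "\<dots> = (\<Sum>x\<in>L. if (x, Down) \<in> S \<and> (x, Up) \<notin> S then (Sminus_set L ^^ j) \<Psi> (flip x S) else 0)"
    by (rule Sminus_set_eq)
  finally have eq: "(Sminus_set L ^^ Suc j) \<Psi> S = \<dots>" .
  show ?case
  proof (cases "nodouble S")
    case False
    have "(\<Sum>x\<in>L. if (x, Down) \<in> S \<and> (x, Up) \<notin> S then (Sminus_set L ^^ j) \<Psi> (flip x S) else 0) = 0"
    proof (rule sum.neutral, rule ballI)
      fix x assume "x \<in> L"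
      show "(if (x, Down) \<in> S \<and> (x, Up) \<notin> S then (Sminus_set L ^^ j) \<Psi> (flip x S) else 0) = 0"
      proof (cases "(x, Down) \<in> S \<and> (x, Up) \<notin> S")
        case True
        have "\<not> nodouble (flip x S)" by (rule not_nodouble_flip[OF False]) (use True in simp)
        then show ?thesis using Suc.IH[of "flip x S"] True by simp
      next
        case F: False
        then show ?thesis by (simp only: F if_False)
      qed
    qed
    then show ?thesis using eq False by simp
  next
    case True
    define D where "D = downs S \<inter> L"
    have finD: "finite D" by simp
    have "(\<Sum>x\<in>L. if (x, Down) \<in> S \<and> (x, Up) \<notin> S then (Sminus_set L ^^ j) \<Psi> (flip x S) else 0)
        = (\<Sum>x\<in>L. if x \<in> D then (if card D = Suc j then of_nat (fact j) * \<Psi> (upL L S) else 0) else 0)"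
    proof (rule sum.cong[OF refl])
      fix x assume xL: "x \<in> L"
      show "(if (x, Down) \<in> S \<and> (x, Up) \<notin> S then (Sminus_set L ^^ j) \<Psi> (flip x S) else 0)
         = (if x \<in> D then (if card D = Suc j then of_nat (fact j) * \<Psi> (upL L S) else 0) else 0)"
      proof (cases "x \<in> D")
        case True
        then have xd: "(x, Down) \<in> S" "(x, Up) \<notin> S" using \<open>nodouble S\<close> unfolding D_def downs_def nodouble_def by auto
        have "downs (flip x S) \<inter> L = D - {x}" unfolding downs_flip D_def by blast
        then have c: "card (downs (flip x S) \<inter> L) = card D - 1"
          using True by (simp add: card_Diff_singleton)
        have "card D > 0" using True finD card_gt_0_iff by blast
        then have "card D \<ge> 1" by simp
        then have "(card D - 1 = j) = (card D = Suc j)" by auto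
        then show ?thesis using xd Suc.IH[of "flip x S"] nodouble_flip[OF \<open>nodouble S\<close>] c upL_flip[OF xL xd(1)] True
          by simp
      next
        case False
        then show ?thesis using xL unfolding D_def downs_def by auto
      qed
    qed
    also have "\<dots> = (\<Sum>x\<in>D. (if card D = Suc j then of_nat (fact j) * \<Psi> (upL L S) else 0))"
    proof -
      have LD: "L \<inter> D = D" by (auto simp: D_def)
      show ?thesis by (simp add: sum.If_cases LD)
    qed
    also have "\<dots> = (if card D = Suc j then of_nat (fact (Suc j)) * \<Psi> (upL L S) else 0)"
      by (simp add: algebra_simps)
    finally show ?thesis using eq True D_def by simp
  qed
qed

lemma foldr_formula:
  fixes L :: "nat \<Rightarrow> 'x::{finite,linorder} set" and \<Psi>0 :: "'x fock" and J :: "nat \<Rightarrow> nat"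
  assumes disj: "\<forall>k\<in>set ks. \<forall>l\<in>set ks. k \<noteq> l \<longrightarrow> L k \<inter> L l = {}"
    and dist: "distinct ks"
    and base: "\<forall>S. \<Psi>0 S \<noteq> 0 \<longrightarrow> downs S = {}"
  shows "foldr (\<lambda>k. Sminus_set (L k) ^^ J k) ks \<Psi>0 S =
    (if nodouble S \<and> downs S \<subseteq> (\<Union>k\<in>set ks. L k) \<and> (\<forall>k\<in>set ks. card (downs S \<inter> L k) = J k)
     then (\<Prod>k\<in>set ks. of_nat (fact (J k))) * \<Psi>0 (upL UNIV S) else 0)"
  using disj dist
proof (induction ks arbitrary: S)
  case Nil
  show ?case
  proof (cases "downs S = {}")
    case True
    then have "nodouble S" unfolding downs_def nodouble_def by auto
    then show ?thesis using True by (simp add: upL_id)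
  next
    case False
    then show ?thesis using base by auto
  qed
next
  case (Cons k ks)
  define G where "G = foldr (\<lambda>k. Sminus_set (L k) ^^ J k) ks \<Psi>0"
  have IH: "\<And>S. G S = (if nodouble S \<and> downs S \<subseteq> (\<Union>k\<in>set ks. L k) \<and> (\<forall>k\<in>set ks. card (downs S \<inter> L k) = J k)
     then (\<Prod>k\<in>set ks. of_nat (fact (J k))) * \<Psi>0 (upL UNIV S) else 0)"
    unfolding G_def using Cons by auto
  have kn: "k \<notin> set ks" using Cons by auto
  have dk: "\<And>l. l \<in> set ks \<Longrightarrow> L k \<inter> L l = {}" using Cons.prems(1) kn by force
  have hyp: "\<forall>S. G S \<noteq> 0 \<longrightarrow> nodouble S \<and> downs S \<inter> L k = {}"
  proof (intro allI impI)
    fix S assume "G S \<noteq> 0"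
    then have "nodouble S" "downs S \<subseteq> (\<Union>k\<in>set ks. L k)" using IH[of S] by (auto split: if_splits)
    then show "nodouble S \<and> downs S \<inter> L k = {}" using dk by blast
  qed
  have "foldr (\<lambda>k. Sminus_set (L k) ^^ J k) (k # ks) \<Psi>0 S = (Sminus_set (L k) ^^ J k) G S"
    unfolding G_def by simp
  also have "\<dots> = (if nodouble S \<and> card (downs S \<inter> L k) = J k then of_nat (fact (J k)) * G (upL (L k) S) else 0)"
    by (rule pow_formula[OF hyp])
  also have "\<dots> = (if nodouble S \<and> downs S \<subseteq> (\<Union>k\<in>set (k # ks). L k) \<and> (\<forall>k\<in>set (k # ks). card (downs S \<inter> L k) = J k)
     then (\<Prod>k\<in>set (k # ks). of_nat (fact (J k))) * \<Psi>0 (upL UNIV S) else 0)"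
  proof (cases "nodouble S")
    case True
    have nd: "nodouble (upL (L k) S)" using True by (rule nodouble_upL)
    have c: "\<And>l. l \<in> set ks \<Longrightarrow> card ((downs S - L k) \<inter> L l) = card (downs S \<inter> L l)"
    proof -
      fix l assume "l \<in> set ks"
      then have "(downs S - L k) \<inter> L l = downs S \<inter> L l" using dk by blast
      then show "card ((downs S - L k) \<inter> L l) = card (downs S \<inter> L l)" by simp
    qed
    have s: "(downs S - L k \<subseteq> (\<Union>k\<in>set ks. L k)) = (downs S \<subseteq> (\<Union>k\<in>set (k # ks). L k))" by auto
    show ?thesis using True nd c s kn
      by (simp add: IH downs_upL upL_upL_UNIV)
  next
    case False
    then show ?thesis by simp
  qed
  finally show ?case .
qed



section \<open>Linear algebra: dual vectors\<close>

definition ip :: "('x::finite \<Rightarrow> real) \<Rightarrow> ('x \<Rightarrow> real) \<Rightarrow> real" where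
  "ip g h = (\<Sum>x\<in>UNIV. g x * h x)"

lemma ip_scale: "ip (\<lambda>x. a * g x) h = a * ip g h"
  unfolding ip_def by (simp add: sum_distrib_left mult.assoc)
lemma ip_scale2: "ip g (\<lambda>x. a * h x) = a * ip g h"
  unfolding ip_def by (simp add: sum_distrib_left algebra_simps)
lemma ip_diff: "ip (\<lambda>x. g x - h x) k = ip g k - ip h k"
  unfolding ip_def by (simp add: sum_subtractf algebra_simps)
lemma ip_diff2: "ip k (\<lambda>x. g x - h x) = ip k g - ip k h"
  unfolding ip_def by (simp add: sum_subtractf algebra_simps)
lemma ip_sum: "ip (\<lambda>x. \<Sum>v\<in>B. c v * g v x) h = (\<Sum>v\<in>B. c v * ip (g v) h)"
  unfolding ip_def by (simp add: sum_distrib_left sum_distrib_right sum.swap[of _ UNIV] mult.assoc)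
lemma ip_sum2: "ip h (\<lambda>x. \<Sum>v\<in>B. c v * g v x) = (\<Sum>v\<in>B. c v * ip h (g v))"
  unfolding ip_def by (simp add: sum_distrib_left sum_distrib_right sum.swap[of _ UNIV] algebra_simps)
lemma ip_comm: "ip g h = ip h g"
  unfolding ip_def by (simp add: mult.commute)

lemma dual_exists_set:
  fixes f :: "'i::finite \<Rightarrow> 'x::finite \<Rightarrow> real" and B :: "'i set"
  assumes indep: "\<forall>c. (\<forall>x. (\<Sum>u\<in>UNIV. c u * f u x) = 0) \<longrightarrow> (\<forall>u. c u = 0)"
  shows "\<exists>\<psi>. \<forall>u\<in>B. \<forall>v\<in>B. ip (\<psi> v) (f u) = (if u = v then 1 else 0)"
proof -
  have "finite B" by simp
  then show ?thesis
proof (induction B rule: finite_induct)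
  case empty
  then show ?case by simp
next
  case (insert w B)
  then obtain \<psi> where \<psi>: "\<forall>u\<in>B. \<forall>v\<in>B. ip (\<psi> v) (f u) = (if u = v then 1 else 0)" by blast
  have wB: "w \<notin> B" by fact
  define r where "r = (\<lambda>x. f w x - (\<Sum>v\<in>B. ip (\<psi> v) (f w) * f v x))"
  have rne: "\<exists>x. r x \<noteq> 0"
  proof (rule ccontr)
    assume "\<not> (\<exists>x. r x \<noteq> 0)"
    then have r0: "\<forall>x. r x = 0" by blast
    define c where "c = (\<lambda>u. if u = w then 1 else if u \<in> B then - ip (\<psi> u) (f w) else 0)"
    have "\<forall>x. (\<Sum>u\<in>UNIV. c u * f u x) = 0"
    proof
      fix x
      have "(\<Sum>u\<in>UNIV. c u * f u x) = (\<Sum>u\<in>insert w B. c u * f u x)"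
        by (rule sum.mono_neutral_right) (auto simp: c_def)
      also have "\<dots> = f w x + (\<Sum>u\<in>B. c u * f u x)" using wB by (simp add: c_def)
      also have "(\<Sum>u\<in>B. c u * f u x) = (\<Sum>u\<in>B. - (ip (\<psi> u) (f w) * f u x))"
        by (rule sum.cong) (auto simp: c_def wB)
      finally show "(\<Sum>u\<in>UNIV. c u * f u x) = 0" using r0 unfolding r_def by (simp add: sum_negf)
    qed
    then have "c w = 0" using indep by blast
    then show False unfolding c_def by simp
  qed
  define nr where "nr = ip r r"
  have nrpos: "nr > 0"
  proof -
    obtain x0 where "r x0 \<noteq> 0" using rne by blast
    have "nr = (\<Sum>x\<in>UNIV. r x * r x)" unfolding nr_def ip_def ..
    also have "\<dots> > 0"
      by (rule sum_pos2[of UNIV x0]) (use \<open>r x0 \<noteq> 0\<close> zero_less_power2[of "r x0"] in \<open>auto simp: power2_eq_square\<close>)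
    finally show ?thesis .
  qed
  have rB: "\<forall>v\<in>B. ip (\<psi> v) r = 0"
  proof
    fix v assume vB: "v \<in> B"
    have "ip (\<psi> v) r = ip (\<psi> v) (f w) - (\<Sum>v'\<in>B. ip (\<psi> v') (f w) * ip (\<psi> v) (f v'))"
      unfolding r_def by (simp add: ip_diff2 ip_sum2)
    also have "(\<Sum>v'\<in>B. ip (\<psi> v') (f w) * ip (\<psi> v) (f v')) = (\<Sum>v'\<in>B. if v' = v then ip (\<psi> v') (f w) else 0)"
      by (rule sum.cong) (auto simp: \<psi> vB)
    also have "\<dots> = ip (\<psi> v) (f w)" using vB by simp
    finally show "ip (\<psi> v) r = 0" by simp
  qed
  define g where "g = (\<lambda>x. (1 / nr) * r x)"
  define \<psi>w where "\<psi>w = (\<lambda>x. g x - (\<Sum>v\<in>B. ip g (f v) * \<psi> v x))"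
  have \<psi>wB: "\<forall>u\<in>B. ip \<psi>w (f u) = 0"
  proof
    fix u assume uB: "u \<in> B"
    have "ip \<psi>w (f u) = ip g (f u) - (\<Sum>v\<in>B. ip g (f v) * ip (\<psi> v) (f u))"
      unfolding \<psi>w_def by (simp add: ip_diff ip_sum)
    also have "(\<Sum>v\<in>B. ip g (f v) * ip (\<psi> v) (f u)) = (\<Sum>v\<in>B. if v = u then ip g (f v) else 0)"
      by (rule sum.cong) (auto simp: \<psi> uB)
    also have "\<dots> = ip g (f u)" using uB by simp
    finally show "ip \<psi>w (f u) = 0" by simp
  qed
  have \<psi>ww: "ip \<psi>w (f w) = 1"
  proof -
    have "ip \<psi>w (f w) = ip g (f w) - (\<Sum>v\<in>B. ip g (f v) * ip (\<psi> v) (f w))"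
      unfolding \<psi>w_def by (simp add: ip_diff ip_sum)
    also have "\<dots> = ip g r"
    proof -
      have "ip g r = ip g (f w) - (\<Sum>v\<in>B. ip (\<psi> v) (f w) * ip g (f v))"
        unfolding r_def by (simp only: ip_diff2 ip_sum2)
      then show ?thesis by (simp add: mult.commute)
    qed
    also have "\<dots> = 1" unfolding g_def using nrpos by (simp only: ip_scale) (simp add: nr_def)
    finally show ?thesis .
  qed
  define \<psi>' where "\<psi>' = (\<lambda>v. if v = w then \<psi>w else (\<lambda>x. \<psi> v x - ip (\<psi> v) (f w) * \<psi>w x))"
  have "\<forall>u\<in>insert w B. \<forall>v\<in>insert w B. ip (\<psi>' v) (f u) = (if u = v then 1 else 0)"
  proof (intro ballI)
    fix u v assume u: "u \<in> insert w B" and v: "v \<in> insert w B"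
    show "ip (\<psi>' v) (f u) = (if u = v then 1 else 0)"
    proof (cases "v = w")
      case True
      then show ?thesis using u \<psi>wB \<psi>ww wB by (auto simp: \<psi>'_def)
    next
      case False
      then have vB: "v \<in> B" using v by auto
      have "ip (\<psi>' v) (f u) = ip (\<psi> v) (f u) - ip (\<psi> v) (f w) * ip \<psi>w (f u)"
        using False by (simp add: \<psi>'_def ip_diff ip_scale)
      then show ?thesis using u vB \<psi> \<psi>wB \<psi>ww wB False by auto
    qed
  qed
  then show ?case by blast
qed
qed

lemma dual_exists:
  fixes f :: "'i::finite \<Rightarrow> 'x::finite \<Rightarrow> real"
  assumes indep: "\<forall>c. (\<forall>x. (\<Sum>u\<in>UNIV. c u * f u x) = 0) \<longrightarrow> (\<forall>u. c u = 0)"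
  shows "\<exists>\<psi>. \<forall>u v. ip (\<psi> v) (f u) = (if u = v then 1 else 0)"
  using dual_exists_set[OF indep, of UNIV] by blast

lemma comp_sub: "C \<in> components \<phi> A \<Longrightarrow> C \<subseteq> A"
  unfolding components_def by auto

lemma comp_prop:
  assumes C: "C \<in> components \<phi> A" and u: "u \<in> A" and ux: "\<phi> u x \<noteq> 0" and xL: "x \<in> Lam \<phi> C"
  shows "u \<in> C"
proof -
  let ?R = "{(a, b). a \<in> A \<and> b \<in> A \<and> dconn \<phi> a b}"
  obtain w where w: "w \<in> A" "C = {v \<in> A. (w, v) \<in> ?R\<^sup>*}" using C unfolding components_def by blast
  obtain v where v: "v \<in> C" "\<phi> v x \<noteq> 0" using xL unfolding Lam_def by blast
  have "(v, u) \<in> ?R" using v w u ux unfolding dconn_def by auto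
  then have "(w, u) \<in> ?R\<^sup>*" using v w by (auto intro: rtrancl_into_rtrancl)
  then show ?thesis using w u by auto
qed

lemma comp_eq:
  assumes C1: "C1 \<in> components \<phi> A" and C2: "C2 \<in> components \<phi> A" and v: "v \<in> C1" "v \<in> C2"
  shows "C1 = C2"
proof -
  let ?R = "{(a, b). a \<in> A \<and> b \<in> A \<and> dconn \<phi> a b}"
  have symR: "sym ?R" unfolding sym_def dconn_def by (auto simp: mult.commute)
  then have sym: "sym (?R\<^sup>*)" by (rule sym_rtrancl)
  obtain w1 where w1: "w1 \<in> A" "C1 = {v \<in> A. (w1, v) \<in> ?R\<^sup>*}" using C1 unfolding components_def by blast
  obtain w2 where w2: "w2 \<in> A" "C2 = {v \<in> A. (w2, v) \<in> ?R\<^sup>*}" using C2 unfolding components_def by blast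
  have a: "(w1, v) \<in> ?R\<^sup>*" "(w2, v) \<in> ?R\<^sup>*" using v w1 w2 by auto
  then have "(v, w2) \<in> ?R\<^sup>*" "(v, w1) \<in> ?R\<^sup>*" using sym unfolding sym_def by blast+
  then have "(w1, w2) \<in> ?R\<^sup>*" "(w2, w1) \<in> ?R\<^sup>*" using a by (meson rtrancl_trans)+
  then show ?thesis unfolding w1 w2 by (auto intro: rtrancl_trans)
qed



section \<open>Products of creation operators\<close>

lemma if_mult0: "(if b then x else 0) * (c::'a::mult_zero) = (if b then x * c else 0)"
  by simp

lemma mult_if0: "(c::'a::mult_zero) * (if b then x else 0) = (if b then c * x else 0)"
  by simp

lemma adag_nz:
  fixes \<phi> :: "'v \<Rightarrow> 'x::{finite,linorder} \<Rightarrow> real"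
  assumes "adag \<phi> u \<sigma> \<Psi> S \<noteq> 0"
  shows "\<exists>x. \<phi> u x \<noteq> 0 \<and> (x, \<sigma>) \<in> S \<and> \<Psi> (S - {(x, \<sigma>)}) \<noteq> 0"
proof -
  have "(\<Sum>x\<in>UNIV. complex_of_real (\<phi> u x) * cre (x, \<sigma>) \<Psi> S) \<noteq> 0"
    using assms unfolding adag_def by simp
  then obtain x where "complex_of_real (\<phi> u x) * cre (x, \<sigma>) \<Psi> S \<noteq> 0"
    using sum.not_neutral_contains_not_neutral by blast
  then show ?thesis unfolding cre_def by (auto split: if_splits)
qed

lemma adag_lin:
  fixes \<phi> :: "'v \<Rightarrow> 'x::{finite,linorder} \<Rightarrow> real"
  shows "adag \<phi> u \<sigma> (\<lambda>S'. \<Sum>i\<in>I. c i * f i S') S = (\<Sum>i\<in>I. c i * adag \<phi> u \<sigma> (f i) S)"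
  unfolding adag_def cre_lin by (simp add: sum_distrib_left sum.swap[of _ I] algebra_simps)

lemma adag_zero:
  fixes \<phi> :: "'v \<Rightarrow> 'x::{finite,linorder} \<Rightarrow> real"
  shows "adag \<phi> u \<sigma> (\<lambda>S. 0) = (\<lambda>S. 0)"
  unfolding adag_def cre_def by (rule ext) (simp only: mult_zero_right if_cancel sum.neutral_const)

lemma ann_adag:
  fixes \<phi> :: "'v \<Rightarrow> 'x::{finite,linorder} \<Rightarrow> real"
  shows "ann n (adag \<phi> u \<sigma> \<Psi>) S =
     (if snd n = \<sigma> then complex_of_real (\<phi> u (fst n)) * \<Psi> S else 0) - adag \<phi> u \<sigma> (ann n \<Psi>) S"
proof -
  have "ann n (adag \<phi> u \<sigma> \<Psi>) S = (\<Sum>x\<in>UNIV. complex_of_real (\<phi> u x) * ann n (cre (x, \<sigma>) \<Psi>) S)"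
    unfolding adag_def by (rule ann_lin)
  also have "\<dots> = (\<Sum>x\<in>UNIV. (if n = (x, \<sigma>) then complex_of_real (\<phi> u x) * \<Psi> S else 0))
       - (\<Sum>x\<in>UNIV. complex_of_real (\<phi> u x) * cre (x, \<sigma>) (ann n \<Psi>) S)"
    unfolding ann_cre by (simp add: algebra_simps sum_subtractf mult_if0)
  also have "(\<Sum>x\<in>UNIV. (if n = (x, \<sigma>) then complex_of_real (\<phi> u x) * \<Psi> S else 0))
       = (if snd n = \<sigma> then complex_of_real (\<phi> u (fst n)) * \<Psi> S else 0)"
  proof (cases "snd n = \<sigma>")
    case True
    then have "\<And>x. (n = (x, \<sigma>)) = (x = fst n)" by (cases n) auto
    then show ?thesis using True by simp
  next
    case False
    then have "\<And>x. n \<noteq> (x, \<sigma>)" by auto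
    then show ?thesis using False by simp
  qed
  finally show ?thesis unfolding adag_def by simp
qed

definition Bop :: "('v \<Rightarrow> 'x::{finite,linorder} \<Rightarrow> real) \<Rightarrow> 'v \<Rightarrow> 'x fock \<Rightarrow> 'x fock" where
  "Bop \<psi> v \<Psi> = (\<lambda>S. \<Sum>x\<in>UNIV. complex_of_real (\<psi> v x) * ann (x, Up) \<Psi> S)"

lemma B_adag:
  fixes \<phi> \<psi> :: "'v \<Rightarrow> 'x::{finite,linorder} \<Rightarrow> real"
  assumes dual: "\<forall>u v. ip (\<psi> v) (\<phi> u) = (if u = v then 1 else 0)"
  shows "Bop \<psi> v (adag \<phi> u Up \<Psi>) S = (if u = v then \<Psi> S else 0) - adag \<phi> u Up (Bop \<psi> v \<Psi>) S"
proof -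
  have "Bop \<psi> v (adag \<phi> u Up \<Psi>) S
      = (\<Sum>x\<in>UNIV. complex_of_real (\<psi> v x) * (complex_of_real (\<phi> u x) * \<Psi> S - adag \<phi> u Up (ann (x, Up) \<Psi>) S))"
    unfolding Bop_def ann_adag by simp
  also have "\<dots> = (\<Sum>x\<in>UNIV. complex_of_real (\<psi> v x * \<phi> u x) * \<Psi> S)
       - (\<Sum>x\<in>UNIV. complex_of_real (\<psi> v x) * adag \<phi> u Up (ann (x, Up) \<Psi>) S)"
    by (simp add: right_diff_distrib sum_subtractf mult.assoc)
  also have "(\<Sum>x\<in>UNIV. complex_of_real (\<psi> v x * \<phi> u x) * \<Psi> S) = (\<Sum>x\<in>UNIV. complex_of_real (\<psi> v x * \<phi> u x)) * \<Psi> S"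
    by (rule sum_distrib_right[symmetric])
  also have "(\<Sum>x\<in>UNIV. complex_of_real (\<psi> v x * \<phi> u x)) = complex_of_real (ip (\<psi> v) (\<phi> u))"
    unfolding ip_def by simp
  also have "(\<Sum>x\<in>UNIV. complex_of_real (\<psi> v x) * adag \<phi> u Up (ann (x, Up) \<Psi>) S)
      = adag \<phi> u Up (Bop \<psi> v \<Psi>) S"
    unfolding Bop_def by (rule adag_lin[symmetric])
  finally show ?thesis using dual by simp
qed

lemma B_vac:
  fixes \<psi> :: "'v \<Rightarrow> 'x::{finite,linorder} \<Rightarrow> real"
  shows "Bop \<psi> v vac = (\<lambda>S. 0)"
  unfolding Bop_def ann_def vac_def by (simp add: fun_eq_iff cong: if_cong)

lemma psi_nz:
  fixes \<phi> \<psi> :: "'v \<Rightarrow> 'x::{finite,linorder} \<Rightarrow> real"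
  assumes dual: "\<forall>u v. ip (\<psi> v) (\<phi> u) = (if u = v then 1 else 0)"
    and "distinct us"
  shows "(\<exists>S. foldr (\<lambda>u. adag \<phi> u Up) us vac S \<noteq> 0) \<and>
         (\<forall>v. v \<notin> set us \<longrightarrow> Bop \<psi> v (foldr (\<lambda>u. adag \<phi> u Up) us vac) = (\<lambda>S. 0))"
  using \<open>distinct us\<close>
proof (induction us)
  case Nil
  have "vac {} \<noteq> (0::complex)" unfolding vac_def by simp
  then show ?case using B_vac by auto
next
  case (Cons u us)
  define P where "P = foldr (\<lambda>u. adag \<phi> u Up) us vac"
  have IH1: "\<exists>S. P S \<noteq> 0" and IH2: "\<forall>v. v \<notin> set us \<longrightarrow> Bop \<psi> v P = (\<lambda>S. 0)"
    using Cons unfolding P_def by auto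
  have un: "u \<notin> set us" using Cons by simp
  have hB: "Bop \<psi> u P = (\<lambda>S. 0)" using IH2 un by simp
  have B1: "Bop \<psi> u (adag \<phi> u Up P) = P"
    by (rule ext) (simp add: B_adag[OF dual] hB adag_zero)
  have B2: "\<forall>v. v \<notin> set (u # us) \<longrightarrow> Bop \<psi> v (adag \<phi> u Up P) = (\<lambda>S. 0)"
  proof (intro allI impI)
    fix v assume v: "v \<notin> set (u # us)"
    then have hB: "Bop \<psi> v P = (\<lambda>S. 0)" using IH2 by simp
    have "u \<noteq> v" using v by auto
    then show "Bop \<psi> v (adag \<phi> u Up P) = (\<lambda>S. 0)"
      by (intro ext) (simp add: B_adag[OF dual] hB adag_zero)
  qed
  have "\<exists>S. adag \<phi> u Up P S \<noteq> 0"
  proof (rule ccontr)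
    assume "\<not> (\<exists>S. adag \<phi> u Up P S \<noteq> 0)"
    then have "adag \<phi> u Up P = (\<lambda>S. 0)" by auto
    then have "P = Bop \<psi> u (\<lambda>S. 0)" using B1 by simp
    also have "\<dots> = (\<lambda>S. 0)" unfolding Bop_def ann_def by (simp cong: if_cong)
    finally show False using IH1 by simp
  qed
  then show ?case using B2 unfolding P_def by simp
qed

lemma psi_supp:
  fixes \<phi> :: "'v \<Rightarrow> 'x::{finite,linorder} \<Rightarrow> real" and C :: "nat \<Rightarrow> 'v set"
  assumes H: "\<forall>k<n. \<forall>u\<in>A. \<forall>x. \<phi> u x \<noteq> 0 \<longrightarrow> (x \<in> Lam \<phi> (C k) \<longleftrightarrow> u \<in> C k)"
  shows "distinct us \<Longrightarrow> set us \<subseteq> A \<Longrightarrow> foldr (\<lambda>u. adag \<phi> u Up) us vac S \<noteq> 0 \<Longrightarrow>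
     (\<forall>p\<in>S. snd p) \<and> card S = length us \<and>
     (\<forall>k<n. card {x \<in> Lam \<phi> (C k). (x, Up) \<in> S} = card (set us \<inter> C k))"
proof (induction us arbitrary: S)
  case Nil
  then have "S = {}" unfolding vac_def by (auto split: if_splits)
  then show ?case by simp
next
  case (Cons u us)
  obtain x where x: "\<phi> u x \<noteq> 0" "(x, Up) \<in> S" and nz: "foldr (\<lambda>u. adag \<phi> u Up) us vac (S - {(x, Up)}) \<noteq> 0"
    using adag_nz[of \<phi> u Up _ S] Cons.prems(3) by auto
  define S' where "S' = S - {(x, Up)}"
  have IH: "(\<forall>p\<in>S'. snd p) \<and> card S' = length us \<and>
     (\<forall>k<n. card {x \<in> Lam \<phi> (C k). (x, Up) \<in> S'} = card (set us \<inter> C k))"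
    using Cons.IH[of S'] Cons.prems nz unfolding S'_def by auto
  have SS: "S = insert (x, Up) S'" "(x, Up) \<notin> S'" using x unfolding S'_def by auto
  have un: "u \<notin> set us" "u \<in> A" using Cons.prems by auto
  have c1: "\<forall>p\<in>S. snd p" using IH SS by auto
  have c2: "card S = length (u # us)" using IH SS by simp
  have c3: "card {y \<in> Lam \<phi> (C k). (y, Up) \<in> S} = card (set (u # us) \<inter> C k)" if k: "k < n" for k
  proof (cases "x \<in> Lam \<phi> (C k)")
    case True
    then have uC: "u \<in> C k" using H k un x by blast
    have e1: "{y \<in> Lam \<phi> (C k). (y, Up) \<in> S} = insert x {y \<in> Lam \<phi> (C k). (y, Up) \<in> S'}"
      using True SS by auto
    have e2: "set (u # us) \<inter> C k = insert u (set us \<inter> C k)" using uC by auto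
    show ?thesis unfolding e1 e2 using IH k SS un by simp
  next
    case False
    then have uC: "u \<notin> C k" using H k un x by blast
    have e1: "{y \<in> Lam \<phi> (C k). (y, Up) \<in> S} = {y \<in> Lam \<phi> (C k). (y, Up) \<in> S'}"
      using False SS by auto
    have e2: "set (u # us) \<inter> C k = set us \<inter> C k" using uC by auto
    show ?thesis unfolding e1 e2 using IH k by simp
  qed
  show ?case using c1 c2 c3 by blast
qed

section \<open>The invariant subspace\<close>

definition inW :: "('v::finite \<Rightarrow> 'x \<Rightarrow> real) \<Rightarrow> 'v set \<Rightarrow> ('x \<Rightarrow> complex) \<Rightarrow> bool" where
  "inW \<phi> A f \<longleftrightarrow> (\<exists>c. \<forall>y. f y = (\<Sum>u\<in>A. c u * complex_of_real (\<phi> u y)))"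

lemma inW_zero: "inW \<phi> A (\<lambda>y. 0)"
  unfolding inW_def by (rule exI[of _ "\<lambda>u. 0"]) simp

lemma inW_add: "inW \<phi> A f \<Longrightarrow> inW \<phi> A g \<Longrightarrow> inW \<phi> A (\<lambda>y. f y + g y)"
  unfolding inW_def
  by (elim exE, rule_tac x="\<lambda>u. c u + ca u" in exI) (simp add: algebra_simps sum.distrib)

lemma inW_scale: "inW \<phi> A f \<Longrightarrow> inW \<phi> A (\<lambda>y. a * f y)"
  unfolding inW_def
  by (elim exE, rule_tac x="\<lambda>u. a * c u" in exI) (simp add: algebra_simps sum_distrib_left)

lemma inW_diff: "inW \<phi> A f \<Longrightarrow> inW \<phi> A g \<Longrightarrow> inW \<phi> A (\<lambda>y. f y - g y)"
  using inW_add[of \<phi> A f "\<lambda>y. (-1) * g y"] inW_scale[of \<phi> A g "-1"] by simp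

lemma inW_sum: "finite I \<Longrightarrow> (\<And>i. i \<in> I \<Longrightarrow> inW \<phi> A (f i)) \<Longrightarrow> inW \<phi> A (\<lambda>y. \<Sum>i\<in>I. f i y)"
proof (induction I rule: finite_induct)
  case empty
  then show ?case using inW_zero by simp
next
  case (insert i I)
  then show ?case using inW_add[of \<phi> A "f i" "\<lambda>y. \<Sum>i\<in>I. f i y"] by simp
qed

lemma inW_cre:
  fixes F :: "'y \<Rightarrow> 'x::{finite,linorder} fock"
  assumes "\<forall>S'. inW \<phi> A (\<lambda>y. F y S')"
  shows "inW \<phi> A (\<lambda>y. cre m (F y) S)"
proof (cases "m \<in> S")
  case True
  then show ?thesis unfolding cre_def using inW_scale[of \<phi> A "\<lambda>y. F y (S - {m})" "fsign m (S - {m})"] assms by simp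
next
  case False
  then show ?thesis unfolding cre_def using inW_zero by simp
qed

lemma inW_ann:
  fixes F :: "'y \<Rightarrow> 'x::{finite,linorder} fock"
  assumes "\<forall>S'. inW \<phi> A (\<lambda>y. F y S')"
  shows "inW \<phi> A (\<lambda>y. ann m (F y) S)"
proof (cases "m \<in> S")
  case False
  then show ?thesis unfolding ann_def using inW_scale[of \<phi> A "\<lambda>y. F y (insert m S)" "fsign m S"] assms by simp
next
  case True
  then show ?thesis unfolding ann_def using inW_zero by simp
qed

lemma inW_adag:
  fixes F :: "'y \<Rightarrow> 'x::{finite,linorder} fock"
  assumes "\<forall>S'. inW \<phi> A (\<lambda>y. F y S')"
  shows "inW \<phi> A (\<lambda>y. adag \<phi>' u \<sigma> (F y) S)"
  unfolding adag_def
  by (rule inW_sum) (simp_all add: inW_scale inW_cre[OF assms])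

lemma inW_Sminus_set:
  fixes F :: "'y \<Rightarrow> 'x::{finite,linorder} fock"
  assumes "\<forall>S'. inW \<phi> A (\<lambda>y. F y S')"
  shows "inW \<phi> A (\<lambda>y. Sminus_set L (F y) S)"
  unfolding Sminus_set_def Sminus_def
  by (rule inW_sum) (auto intro!: inW_cre inW_ann assms)

lemma inW_indicator:
  assumes f: "inW \<phi> A f" and H: "\<forall>u\<in>A. \<forall>x. \<phi> u x \<noteq> 0 \<longrightarrow> (x \<in> L \<longleftrightarrow> u \<in> C)"
  shows "inW \<phi> A (\<lambda>y. if y \<in> L then f y else 0)"
proof -
  obtain c where c: "\<forall>y. f y = (\<Sum>u\<in>A. c u * complex_of_real (\<phi> u y))" using f unfolding inW_def by blast
  have "\<forall>y. (if y \<in> L then f y else 0) = (\<Sum>u\<in>A. (if u \<in> C then c u else 0) * complex_of_real (\<phi> u y))"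
  proof
    fix y
    show "(if y \<in> L then f y else 0) = (\<Sum>u\<in>A. (if u \<in> C then c u else 0) * complex_of_real (\<phi> u y))"
    proof (cases "y \<in> L")
      case True
      have "f y = (\<Sum>u\<in>A. c u * complex_of_real (\<phi> u y))" using c by blast
      also have "\<dots> = (\<Sum>u\<in>A. (if u \<in> C then c u else 0) * complex_of_real (\<phi> u y))"
      proof (rule sum.cong[OF refl])
        fix u assume uA: "u \<in> A"
        show "c u * complex_of_real (\<phi> u y) = (if u \<in> C then c u else 0) * complex_of_real (\<phi> u y)"
          using H uA True by (cases "\<phi> u y = 0") auto
      qed
      finally show ?thesis using True by simp
    next
      case False
      show ?thesis using False H by (auto intro!: sum.neutral)
    qed
  qed
  then show ?thesis unfolding inW_def by (rule exI[of _ "\<lambda>u. if u \<in> C then c u else 0"])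
qed

definition Good :: "('v::finite \<Rightarrow> 'x::{finite,linorder} \<Rightarrow> real) \<Rightarrow> 'v set \<Rightarrow> 'x fock \<Rightarrow> bool" where
  "Good \<phi> A \<Psi> \<longleftrightarrow> (\<forall>\<sigma> S. inW \<phi> A (\<lambda>y. ann (y, \<sigma>) \<Psi> S))"

lemma good_vac: "Good \<phi> A vac"
  unfolding Good_def ann_def vac_def using inW_zero by (simp cong: if_cong)

lemma good_adag:
  assumes g: "Good \<phi> A \<Psi>" and u: "u \<in> A"
  shows "Good \<phi> A (adag \<phi> u \<sigma> \<Psi>)"
  unfolding Good_def
proof (intro allI)
  fix \<sigma>' S
  have e: "(\<lambda>y. ann (y, \<sigma>') (adag \<phi> u \<sigma> \<Psi>) S) =
     (\<lambda>y. (if \<sigma>' = \<sigma> then \<Psi> S else 0) * complex_of_real (\<phi> u y) - adag \<phi> u \<sigma> (ann (y, \<sigma>') \<Psi>) S)"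
    unfolding ann_adag by auto
  have 1: "inW \<phi> A (\<lambda>y. (if \<sigma>' = \<sigma> then \<Psi> S else 0) * complex_of_real (\<phi> u y))"
    unfolding inW_def
    by (rule exI[of _ "\<lambda>v. if v = u then (if \<sigma>' = \<sigma> then \<Psi> S else 0) else 0"]) (simp add: u if_mult0 sum.delta)
  have 2: "inW \<phi> A (\<lambda>y. adag \<phi> u \<sigma> (ann (y, \<sigma>') \<Psi>) S)"
    by (rule inW_adag) (use g in \<open>simp add: Good_def\<close>)
  show "inW \<phi> A (\<lambda>y. ann (y, \<sigma>') (adag \<phi> u \<sigma> \<Psi>) S)"
    unfolding e by (rule inW_diff[OF 1 2])
qed

lemma ann_Sminus_set:
  fixes L :: "'x::{finite,linorder} set"
  shows "ann (y, \<sigma>) (Sminus_set L \<Psi>) S =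
    (if \<sigma> = Down \<and> y \<in> L then ann (y, Up) \<Psi> S else 0) + Sminus_set L (ann (y, \<sigma>) \<Psi>) S"
proof -
  have aa: "\<And>x. ann (y, \<sigma>) (ann (x, Up) \<Psi>) = (\<lambda>S'. (-1) * ann (x, Up) (ann (y, \<sigma>) \<Psi>) S')"
    by (rule ext) (simp add: ann_ann[of "(y, \<sigma>)"])
  have "ann (y, \<sigma>) (Sminus_set L \<Psi>) S = (\<Sum>x\<in>L. ann (y, \<sigma>) (cre (x, Down) (ann (x, Up) \<Psi>)) S)"
    unfolding Sminus_set_def Sminus_def by (rule ann_sum)
  also have "\<dots> = (\<Sum>x\<in>L. (if (y, \<sigma>) = (x, Down) then ann (x, Up) \<Psi> S else 0))
      + (\<Sum>x\<in>L. cre (x, Down) (ann (x, Up) (ann (y, \<sigma>) \<Psi>)) S)"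
    unfolding ann_cre aa cre_scale by (simp add: sum.distrib)
  also have "(\<Sum>x\<in>L. (if (y, \<sigma>) = (x, Down) then ann (x, Up) \<Psi> S else 0))
     = (if \<sigma> = Down \<and> y \<in> L then ann (y, Up) \<Psi> S else 0)"
  proof (cases "\<sigma> = Down")
    case True
    then have "\<And>x. ((y, \<sigma>) = (x, Down)) = (x = y)" by auto
    then show ?thesis using True by (simp add: sum.delta')
  next
    case False
    then show ?thesis by simp
  qed
  finally show ?thesis unfolding Sminus_set_def Sminus_def by simp
qed

lemma good_Sminus_set:
  assumes g: "Good \<phi> A \<Psi>" and H: "\<forall>u\<in>A. \<forall>x. \<phi> u x \<noteq> 0 \<longrightarrow> (x \<in> L \<longleftrightarrow> u \<in> C)"
  shows "Good \<phi> A (Sminus_set L \<Psi>)"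
  unfolding Good_def
proof (intro allI)
  fix \<sigma> S
  have 1: "inW \<phi> A (\<lambda>y. if \<sigma> = Down \<and> y \<in> L then ann (y, Up) \<Psi> S else 0)"
  proof (cases "\<sigma> = Down")
    case True
    have "inW \<phi> A (\<lambda>y. if y \<in> L then ann (y, Up) \<Psi> S else 0)"
      by (rule inW_indicator[OF _ H]) (use g in \<open>simp add: Good_def\<close>)
    then show ?thesis using True by simp
  next
    case False
    then show ?thesis using inW_zero by simp
  qed
  have 2: "inW \<phi> A (\<lambda>y. Sminus_set L (ann (y, \<sigma>) \<Psi>) S)"
    by (rule inW_Sminus_set) (use g in \<open>simp add: Good_def\<close>)
  show "inW \<phi> A (\<lambda>y. ann (y, \<sigma>) (Sminus_set L \<Psi>) S)"
    unfolding ann_Sminus_set by (rule inW_add[OF 1 2])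
qed

lemma good_pow:
  assumes g: "Good \<phi> A \<Psi>" and H: "\<forall>u\<in>A. \<forall>x. \<phi> u x \<noteq> 0 \<longrightarrow> (x \<in> L \<longleftrightarrow> u \<in> C)"
  shows "Good \<phi> A ((Sminus_set L ^^ j) \<Psi>)"
proof (induction j)
  case 0
  then show ?case using g by simp
next
  case (Suc j)
  then show ?case using good_Sminus_set[OF Suc.IH H] by simp
qed

lemma good_foldr_S:
  assumes g: "Good \<phi> A \<Psi>"
    and H: "\<forall>k\<in>set ks. \<forall>u\<in>A. \<forall>x. \<phi> u x \<noteq> 0 \<longrightarrow> (x \<in> L k \<longleftrightarrow> u \<in> C k)"
  shows "Good \<phi> A (foldr (\<lambda>k. Sminus_set (L k) ^^ J k) ks \<Psi>)"
  using H
proof (induction ks)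
  case Nil
  then show ?case using g by simp
next
  case (Cons k ks)
  have IH: "Good \<phi> A (foldr (\<lambda>k. Sminus_set (L k) ^^ J k) ks \<Psi>)" using Cons by simp
  have Hk: "\<forall>u\<in>A. \<forall>x. \<phi> u x \<noteq> 0 \<longrightarrow> (x \<in> L k \<longleftrightarrow> u \<in> C k)" using Cons.prems by simp
  show ?case using good_pow[OF IH Hk, of "J k"] by simp
qed

lemma good_foldr_adag:
  assumes "set us \<subseteq> A"
  shows "Good \<phi> A (foldr (\<lambda>u. adag \<phi> u Up) us vac)"
  using assms
proof (induction us)
  case Nil
  then show ?case using good_vac by simp
next
  case (Cons u us)
  have IH: "Good \<phi> A (foldr (\<lambda>u. adag \<phi> u Up) us vac)" using Cons by simp
  show ?case using good_adag[OF IH, of u Up] Cons.prems by simp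
qed

lemma inW_eig:
  assumes eig: "\<forall>u. \<phi> u \<in> eigspace t e" and f: "inW \<phi> A f"
  shows "(\<Sum>y\<in>UNIV. complex_of_real (t x y) * f y) = complex_of_real e * f x"
proof -
  obtain c where c: "\<forall>y. f y = (\<Sum>u\<in>A. c u * complex_of_real (\<phi> u y))" using f unfolding inW_def by blast
  have ev: "\<And>u. (\<Sum>y\<in>UNIV. complex_of_real (t x y) * complex_of_real (\<phi> u y)) = complex_of_real e * complex_of_real (\<phi> u x)"
  proof -
    fix u
    have "(\<Sum>y\<in>UNIV. t x y * \<phi> u y) = e * \<phi> u x" using eig unfolding eigspace_def by blast
    then have "complex_of_real (\<Sum>y\<in>UNIV. t x y * \<phi> u y) = complex_of_real (e * \<phi> u x)" by simp
    then show "?thesis u" by simp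
  qed
  have "(\<Sum>y\<in>UNIV. complex_of_real (t x y) * f y)
      = (\<Sum>y\<in>UNIV. \<Sum>u\<in>A. c u * (complex_of_real (t x y) * complex_of_real (\<phi> u y)))"
    by (rule sum.cong[OF refl]) (simp add: c sum_distrib_left algebra_simps)
  also have "\<dots> = (\<Sum>u\<in>A. \<Sum>y\<in>UNIV. c u * (complex_of_real (t x y) * complex_of_real (\<phi> u y)))"
    by (rule sum.swap)
  also have "\<dots> = (\<Sum>u\<in>A. c u * (\<Sum>y\<in>UNIV. complex_of_real (t x y) * complex_of_real (\<phi> u y)))"
    by (simp add: sum_distrib_left)
  also have "\<dots> = (\<Sum>u\<in>A. complex_of_real e * (c u * complex_of_real (\<phi> u x)))"
    unfolding ev by (simp add: algebra_simps)
  also have "\<dots> = complex_of_real e * f x" by (simp add: c sum_distrib_left)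
  finally show ?thesis .
qed

lemma Hhop_good:
  fixes t :: "'x::{finite,linorder} \<Rightarrow> 'x \<Rightarrow> real"
  assumes eig: "\<forall>u. \<phi> u \<in> eigspace t e" and g: "Good \<phi> A \<Phi>"
  shows "Hhop t \<Phi> S = complex_of_real e * Nop \<Phi> S"
proof -
  have "Hhop t \<Phi> S = (\<Sum>x\<in>UNIV. \<Sum>\<sigma>\<in>UNIV. \<Sum>y\<in>UNIV. complex_of_real (t x y) * cre (x, \<sigma>) (ann (y, \<sigma>) \<Phi>) S)"
    unfolding Hhop_def by (rule sum.cong[OF refl], rule sum.swap)
  also have "\<dots> = (\<Sum>x\<in>UNIV. \<Sum>\<sigma>\<in>UNIV. cre (x, \<sigma>) (\<lambda>S'. \<Sum>y\<in>UNIV. complex_of_real (t x y) * ann (y, \<sigma>) \<Phi> S') S)"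
    unfolding cre_lin ..
  also have "\<dots> = (\<Sum>x\<in>UNIV. \<Sum>\<sigma>\<in>UNIV. cre (x, \<sigma>) (\<lambda>S'. complex_of_real e * ann (x, \<sigma>) \<Phi> S') S)"
  proof -
    have "\<And>x \<sigma> S'. (\<Sum>y\<in>UNIV. complex_of_real (t x y) * ann (y, \<sigma>) \<Phi> S') = complex_of_real e * ann (x, \<sigma>) \<Phi> S'"
      by (rule inW_eig[OF eig, where A=A]) (use g in \<open>simp add: Good_def\<close>)
    then show ?thesis by simp
  qed
  also have "\<dots> = complex_of_real e * Nop \<Phi> S"
    unfolding cre_scale Nop_def numop_def by (simp add: sum_distrib_left)
  finally show ?thesis .
qed



section \<open>Rayleigh bound\<close>

definition Qf :: "('x::finite \<Rightarrow> 'x \<Rightarrow> real) \<Rightarrow> ('x \<Rightarrow> real) \<Rightarrow> real" where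
  "Qf t p = (\<Sum>x\<in>UNIV. \<Sum>y\<in>UNIV. t x y * p x * p y)"

definition Nf :: "('x::finite \<Rightarrow> real) \<Rightarrow> real" where
  "Nf p = (\<Sum>x\<in>UNIV. p x * p x)"

lemma Nf_nonneg: "Nf p \<ge> 0"
  unfolding Nf_def by (rule sum_nonneg) simp

lemma Nf_zero: "Nf p = 0 \<Longrightarrow> p x = 0"
proof -
  assume "Nf p = 0"
  then have "\<forall>x\<in>UNIV. p x * p x = 0" unfolding Nf_def by (subst sum_nonneg_eq_0_iff[symmetric]) auto
  then show "p x = 0" by simp
qed

lemma Nf_bound: "p x * p x \<le> Nf p"
  unfolding Nf_def by (rule member_le_sum) auto

lemma Qf_scale: "Qf t (\<lambda>x. a * p x) = a * a * Qf t p"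
  unfolding Qf_def by (simp add: sum_distrib_left algebra_simps)

lemma Nf_scale: "Nf (\<lambda>x. a * p x) = a * a * Nf p"
  unfolding Nf_def by (simp add: sum_distrib_left algebra_simps)

lemma Qf_lower_bound:
  fixes t :: "'x::finite \<Rightarrow> 'x \<Rightarrow> real"
  assumes "Nf p = 1"
  shows "Qf t p \<ge> - (\<Sum>x\<in>UNIV. \<Sum>y\<in>UNIV. \<bar>t x y\<bar>)"
proof -
  have b: "\<bar>p x\<bar> \<le> 1" for x
  proof -
    have "\<bar>p x\<bar> * \<bar>p x\<bar> \<le> 1" using Nf_bound[of p x] assms by (simp add: abs_mult[symmetric])
    then show ?thesis by (metis abs_ge_zero mult_le_cancel_left1 mult.commute not_le mult_le_one order_trans linorder_not_le le_less)
  qed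
  have "- (\<Sum>x\<in>UNIV. \<Sum>y\<in>UNIV. \<bar>t x y\<bar>) = (\<Sum>x\<in>UNIV. \<Sum>y\<in>UNIV. - \<bar>t x y\<bar>)" by (simp add: sum_negf)
  also have "\<dots> \<le> Qf t p" unfolding Qf_def
  proof (intro sum_mono)
    fix x y
    have "\<bar>t x y * p x * p y\<bar> = \<bar>t x y\<bar> * (\<bar>p x\<bar> * \<bar>p y\<bar>)" by (simp add: abs_mult)
    also have "\<dots> \<le> \<bar>t x y\<bar> * 1" by (intro mult_left_mono) (use b in \<open>auto intro: mult_le_one\<close>)
    finally show "- \<bar>t x y\<bar> \<le> t x y * p x * p y" by linarith
  qed
  finally show ?thesis .
qed

lemma conv_subseq:
  fixes P :: "nat \<Rightarrow> 'x \<Rightarrow> real" and X :: "'x set"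
  assumes fin: "finite X" and bnd: "\<forall>n x. \<bar>P n x\<bar> \<le> 1"
  shows "\<exists>r. strict_mono r \<and> (\<forall>x\<in>X. convergent (\<lambda>n. P (r n) x))"
  using fin
proof (induction X rule: finite_induct)
  case empty
  show ?case by (rule exI[of _ id]) (simp add: strict_mono_def)
next
  case (insert x X)
  then obtain r where r: "strict_mono r" "\<forall>y\<in>X. convergent (\<lambda>n. P (r n) y)" by blast
  obtain r' where r': "strict_mono r'" "monoseq (\<lambda>n. P (r (r' n)) x)"
    using seq_monosub[of "\<lambda>n. P (r n) x"] by blast
  have "Bseq (\<lambda>n. P (r (r' n)) x)" by (rule BseqI'[of _ 1]) (use bnd in simp)
  then have cx: "convergent (\<lambda>n. P (r (r' n)) x)" using r'(2) by (rule Bseq_monoseq_convergent)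
  have cy: "convergent (\<lambda>n. P (r (r' n)) y)" if "y \<in> X" for y
    using convergent_subseq_convergent[OF r(2)[rule_format, OF that] r'(1)] by (simp add: comp_def)
  have "strict_mono (r \<circ> r')" using r(1) r'(1) by (rule strict_mono_o)
  then show ?case using cx cy unfolding comp_def by (intro exI[of _ "\<lambda>n. r (r' n)"]) auto
qed

definition bil :: "('x::finite \<Rightarrow> 'x \<Rightarrow> real) \<Rightarrow> real \<Rightarrow> ('x \<Rightarrow> real) \<Rightarrow> ('x \<Rightarrow> real) \<Rightarrow> real" where
  "bil t m g h = (\<Sum>x\<in>UNIV. \<Sum>y\<in>UNIV. t x y * g x * h y) - m * (\<Sum>x\<in>UNIV. g x * h x)"

lemma bil_expand:
  "bil t m (\<lambda>x. g x + s * h x) (\<lambda>x. g x + s * h x) = bil t m g g + s * bil t m g h + s * bil t m h g + s * s * bil t m h h"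
  unfolding bil_def by (simp add: algebra_simps sum.distrib sum_distrib_left sum_subtractf)

lemma bil_sym: "\<forall>x y. t x y = t y x \<Longrightarrow> bil t m g h = bil t m h g"
  unfolding bil_def by (subst sum.swap) (simp add: algebra_simps)

lemma bil_QN: "bil t m p p = Qf t p - m * Nf p"
  unfolding bil_def Qf_def Nf_def ..

lemma bil_Mv: "bil t m w v = (\<Sum>x\<in>UNIV. w x * ((\<Sum>y\<in>UNIV. t x y * v y) - m * v x))"
  unfolding bil_def by (simp add: algebra_simps sum_distrib_left sum_subtractf)

lemma quad_lower_real:
  fixes t :: "'x::finite \<Rightarrow> 'x \<Rightarrow> real"
  assumes sym: "\<forall>x y. t x y = t y x" and mine: "is_min_eigval t e"
  shows "Qf t p \<ge> e * Nf p"
proof -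
  define K where "K = {p :: 'x \<Rightarrow> real. Nf p = 1}"
  obtain x0 :: 'x where True by blast
  have K0: "(\<lambda>x. if x = x0 then 1 else 0) \<in> K" unfolding K_def Nf_def by (simp add: if_distrib cong: if_cong)
  define B where "B = (\<Sum>x\<in>UNIV. \<Sum>y\<in>UNIV. \<bar>t x y\<bar>)"
  have bdd: "bdd_below (Qf t ` K)" unfolding bdd_below_def K_def
    using Qf_lower_bound[of _ t] by (intro exI[of _ "- B"]) (auto simp: B_def)
  define \<mu> where "\<mu> = Inf (Qf t ` K)"
  have mu_le: "\<mu> \<le> Qf t q" if "q \<in> K" for q unfolding \<mu>_def using bdd that by (auto intro: cInf_lower)
  have "\<forall>n. \<exists>q\<in>K. Qf t q < \<mu> + 1 / real (Suc n)"
  proof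
    fix n
    have "Inf (Qf t ` K) < \<mu> + 1 / real (Suc n)" unfolding \<mu>_def by simp
    then obtain y where "y \<in> Qf t ` K" "y < \<mu> + 1 / real (Suc n)" using K0 cInf_lessD[of "Qf t ` K"] by blast
    then show "\<exists>q\<in>K. Qf t q < \<mu> + 1 / real (Suc n)" by blast
  qed
  then obtain P where P: "\<forall>n. P n \<in> K \<and> Qf t (P n) < \<mu> + 1 / real (Suc n)" by metis
  have bndP: "\<forall>n x. \<bar>P n x\<bar> \<le> 1"
  proof (intro allI)
    fix n x
    have "\<bar>P n x\<bar> * \<bar>P n x\<bar> \<le> 1" using Nf_bound[of "P n" x] P unfolding K_def by (simp add: abs_mult[symmetric])
    then show "\<bar>P n x\<bar> \<le> 1" by (metis abs_ge_zero mult_le_cancel_left1 not_le mult_le_one order_trans linorder_not_le le_less)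
  qed
  obtain r where r: "strict_mono r" "\<forall>x\<in>UNIV. convergent (\<lambda>n. P (r n) x)"
    using conv_subseq[OF finite_UNIV bndP] by blast
  define v where "v = (\<lambda>x. lim (\<lambda>n. P (r n) x))"
  have lv: "(\<lambda>n. P (r n) x) \<longlonglongrightarrow> v x" for x using r(2) unfolding v_def by (simp add: convergent_LIMSEQ_iff)
  have lN: "(\<lambda>n. Nf (P (r n))) \<longlonglongrightarrow> Nf v" unfolding Nf_def by (intro tendsto_intros lv)
  have lQ: "(\<lambda>n. Qf t (P (r n))) \<longlonglongrightarrow> Qf t v" unfolding Qf_def by (intro tendsto_intros lv)
  have "(\<lambda>n. Nf (P (r n))) = (\<lambda>n. 1)" using P unfolding K_def by simp
  then have Nv: "Nf v = 1" using lN LIMSEQ_unique tendsto_const by metis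
  then have "\<mu> \<le> Qf t v" using mu_le K_def by simp
  moreover have "Qf t v \<le> \<mu>"
  proof (rule field_le_epsilon)
    fix d :: real assume d: "d > 0"
    obtain N :: nat where N: "1 / real (Suc N) < d"
      using d by (metis nat_approx_posE)
    show "Qf t v \<le> \<mu> + d"
    proof (rule LIMSEQ_le_const2[OF lQ], rule exI[of _ N], intro allI impI)
      fix n assume "N \<le> n"
      then have "N \<le> r n" using seq_suble[OF r(1), of n] by simp
      then have "1 / real (Suc (r n)) \<le> 1 / real (Suc N)" by (simp add: frac_le)
      then show "Qf t (P (r n)) \<le> \<mu> + d" using P N by (smt (verit))
    qed
  qed
  ultimately have Qv: "Qf t v = \<mu>" by simp
  have Qall: "Qf t z \<ge> \<mu> * Nf z" for z
  proof (cases "Nf z = 0")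
    case True
    then have "\<And>x. z x = 0" using Nf_zero by blast
    then show ?thesis using True unfolding Qf_def by simp
  next
    case False
    then have Np: "Nf z > 0" using Nf_nonneg[of z] by simp
    define s where "s = sqrt (Nf z)"
    have s: "s > 0" "s * s = Nf z" using Np unfolding s_def by (auto simp: real_sqrt_mult_self)
    define q where "q = (\<lambda>x. (1 / s) * z x)"
    have "Nf q = 1" unfolding q_def Nf_scale using s False by (simp add: field_simps)
    then have "\<mu> \<le> Qf t q" using mu_le K_def by simp
    also have "Qf t q = Qf t z / Nf z" unfolding q_def Qf_scale using s by (simp add: field_simps)
    finally show ?thesis using Np by (simp add: field_simps)
  qed
  define w where "w = (\<lambda>x. (\<Sum>y\<in>UNIV. t x y * v y) - \<mu> * v x)"
  have bw: "bil t \<mu> w v = Nf w" unfolding bil_Mv w_def Nf_def ..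
  have b0: "bil t \<mu> v v = 0" using Qv Nv by (simp add: bil_QN)
  have bww: "bil t \<mu> w w \<ge> 0" using Qall[of w] by (simp add: bil_QN)
  have pos: "0 \<le> 2 * s * Nf w + s * s * bil t \<mu> w w" for s
  proof -
    have "0 \<le> bil t \<mu> (\<lambda>x. v x + s * w x) (\<lambda>x. v x + s * w x)"
      using Qall[of "\<lambda>x. v x + s * w x"] by (simp add: bil_QN)
    also have "\<dots> = 2 * s * Nf w + s * s * bil t \<mu> w w"
      unfolding bil_expand b0 bw using bil_sym[OF sym, of \<mu> v w] bw by simp
    finally show ?thesis .
  qed
  have Nw: "Nf w = 0"
  proof (rule ccontr)
    assume "Nf w \<noteq> 0"
    then have a: "Nf w > 0" using Nf_nonneg[of w] by simp
    define b where "b = bil t \<mu> w w"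
    define s where "s = - Nf w / (b + 1)"
    have b1: "b + 1 > 0" using bww b_def by simp
    have z0: "0 \<le> 2 * s * Nf w + s * s * b" using pos[of s] b_def by simp
    have sneg: "s < 0" unfolding s_def using a b1 by (simp add: divide_neg_pos)
    have "b / (b + 1) \<le> 1" using b1 by simp
    then have "Nf w * (b / (b + 1)) \<le> Nf w * 1" using a by (intro mult_left_mono) auto
    then have "s * b \<ge> - Nf w" unfolding s_def by (simp add: field_simps)
    then have "2 * Nf w + s * b > 0" using a by simp
    then have "s * (2 * Nf w + s * b) < 0" using sneg by (simp add: mult_neg_pos)
    also have "s * (2 * Nf w + s * b) = 2 * s * Nf w + s * s * b" by (simp add: algebra_simps)
    finally show False using z0 by simp
  qed
  have eig: "v \<in> eigspace t \<mu>"
    unfolding eigspace_def using Nf_zero[OF Nw] unfolding w_def by auto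
  have "\<exists>x. v x \<noteq> 0"
  proof (rule ccontr)
    assume "\<not> (\<exists>x. v x \<noteq> 0)"
    then have "Nf v = 0" unfolding Nf_def by simp
    then show False using Nv by simp
  qed
  then have "is_eigval t \<mu>" unfolding is_eigval_def using eig by blast
  then have "e \<le> \<mu>" using mine unfolding is_min_eigval_def by blast
  then have "e * Nf p \<le> \<mu> * Nf p" using Nf_nonneg[of p] by (rule mult_right_mono)
  also have "\<dots> \<le> Qf t p" by (rule Qall)
  finally show ?thesis .
qed



section \<open>Lower bound\<close>

lemma quad_lower_complex:
  fixes t :: "'x::finite \<Rightarrow> 'x \<Rightarrow> real" and a :: "'x \<Rightarrow> complex"
  assumes sym: "\<forall>x y. t x y = t y x" and mine: "is_min_eigval t e"
  shows "Re (\<Sum>x\<in>UNIV. \<Sum>y\<in>UNIV. complex_of_real (t x y) * (cnj (a x) * a y))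
      \<ge> e * (\<Sum>x\<in>UNIV. Re (cnj (a x) * a x))"
proof -
  have l: "Re (\<Sum>x\<in>UNIV. \<Sum>y\<in>UNIV. complex_of_real (t x y) * (cnj (a x) * a y))
      = Qf t (\<lambda>x. Re (a x)) + Qf t (\<lambda>x. Im (a x))"
    unfolding Qf_def by (simp add: sum.distrib[symmetric] algebra_simps)
  have r: "(\<Sum>x\<in>UNIV. Re (cnj (a x) * a x)) = Nf (\<lambda>x. Re (a x)) + Nf (\<lambda>x. Im (a x))"
    unfolding Nf_def by (simp add: sum.distrib[symmetric])
  show ?thesis unfolding l r
    using quad_lower_real[OF sym mine, of "\<lambda>x. Re (a x)"] quad_lower_real[OF sym mine, of "\<lambda>x. Im (a x)"]
    by (simp add: distrib_left)
qed

lemma cnj_if: "cnj (if b then x else y) = (if b then cnj x else cnj y)"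
  by simp

lemma if_mult0': "(if b then 0 else x) * (c::'a::mult_zero) = (if b then 0 else x * c)"
  by simp

lemma adj_cre:
  fixes \<Psi> \<Phi> :: "'x::{finite,linorder} fock"
  shows "(\<Sum>S\<in>UNIV. cnj (\<Psi> S) * cre m \<Phi> S) = (\<Sum>S\<in>UNIV. cnj (ann m \<Psi> S) * \<Phi> S)"
proof -
  have L: "(\<Sum>S\<in>UNIV. cnj (\<Psi> S) * cre m \<Phi> S) = (\<Sum>S\<in>{S. m \<in> S}. cnj (\<Psi> S) * (fsign m (S - {m}) * \<Phi> (S - {m})))"
    unfolding cre_def mult_if0 by (simp add: sum.If_cases)
  have R: "(\<Sum>S\<in>UNIV. cnj (ann m \<Psi> S) * \<Phi> S) = (\<Sum>T\<in>{T. m \<notin> T}. cnj (fsign m T * \<Psi> (insert m T)) * \<Phi> T)"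
    unfolding ann_def cnj_if complex_cnj_zero if_mult0' by (simp add: sum.If_cases Compl_eq)
  have img: "{S. m \<in> S} = insert m ` {T. m \<notin> T}"
  proof (rule set_eqI, rule iffI)
    fix S assume "S \<in> {S. m \<in> S}"
    then have "S = insert m (S - {m})" "S - {m} \<in> {T. m \<notin> T}" by auto
    then show "S \<in> insert m ` {T. m \<notin> T}" by blast
  qed auto
  have inj: "inj_on (insert m) {T. m \<notin> T}"
    unfolding inj_on_def by (metis Diff_insert_absorb mem_Collect_eq)
  have "(\<Sum>S\<in>{S. m \<in> S}. cnj (\<Psi> S) * (fsign m (S - {m}) * \<Phi> (S - {m})))
      = (\<Sum>T\<in>{T. m \<notin> T}. cnj (\<Psi> (insert m T)) * (fsign m (insert m T - {m}) * \<Phi> (insert m T - {m})))"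
    unfolding img by (subst sum.reindex[OF inj]) (simp add: comp_def)
  also have "\<dots> = (\<Sum>T\<in>{T. m \<notin> T}. cnj (fsign m T * \<Psi> (insert m T)) * \<Phi> T)"
    by (rule sum.cong) (auto simp: fsign_real)
  finally show ?thesis using L R by simp
qed

lemma swap4:
  "(\<Sum>a\<in>A. \<Sum>b\<in>B. \<Sum>c\<in>C. \<Sum>d\<in>D. f a b c d) = (\<Sum>d\<in>D. \<Sum>a\<in>A. \<Sum>b\<in>B. \<Sum>c\<in>C. f a b c d)"
proof -
  have "(\<Sum>a\<in>A. \<Sum>b\<in>B. \<Sum>c\<in>C. \<Sum>d\<in>D. f a b c d) = (\<Sum>a\<in>A. \<Sum>b\<in>B. \<Sum>d\<in>D. \<Sum>c\<in>C. f a b c d)"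
    by (intro sum.cong refl sum.swap)
  also have "\<dots> = (\<Sum>a\<in>A. \<Sum>d\<in>D. \<Sum>b\<in>B. \<Sum>c\<in>C. f a b c d)"
    by (intro sum.cong refl sum.swap)
  also have "\<dots> = (\<Sum>d\<in>D. \<Sum>a\<in>A. \<Sum>b\<in>B. \<Sum>c\<in>C. f a b c d)"
    by (rule sum.swap)
  finally show ?thesis .
qed

lemma hop_inner:
  fixes \<Psi> :: "'x::{finite,linorder} fock" and t :: "'x \<Rightarrow> 'x \<Rightarrow> real"
  shows "(\<Sum>S\<in>UNIV. cnj (\<Psi> S) * Hhop t \<Psi> S) =
    (\<Sum>\<sigma>\<in>UNIV. \<Sum>S\<in>UNIV. \<Sum>x\<in>UNIV. \<Sum>y\<in>UNIV. complex_of_real (t x y) * (cnj (ann (x, \<sigma>) \<Psi> S) * ann (y, \<sigma>) \<Psi> S))"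
proof -
  have "(\<Sum>S\<in>UNIV. cnj (\<Psi> S) * Hhop t \<Psi> S) =
     (\<Sum>S\<in>UNIV. \<Sum>x\<in>UNIV. \<Sum>y\<in>UNIV. \<Sum>\<sigma>\<in>UNIV. complex_of_real (t x y) * (cnj (\<Psi> S) * cre (x, \<sigma>) (ann (y, \<sigma>) \<Psi>) S))"
    unfolding Hhop_def by (simp add: sum_distrib_left algebra_simps)
  also have "\<dots> = (\<Sum>x\<in>UNIV. \<Sum>y\<in>UNIV. \<Sum>\<sigma>\<in>UNIV. \<Sum>S\<in>UNIV. complex_of_real (t x y) * (cnj (\<Psi> S) * cre (x, \<sigma>) (ann (y, \<sigma>) \<Psi>) S))"
    by (rule swap4[symmetric])
  also have "\<dots> = (\<Sum>x\<in>UNIV. \<Sum>y\<in>UNIV. \<Sum>\<sigma>\<in>UNIV. complex_of_real (t x y) * (\<Sum>S\<in>UNIV. cnj (\<Psi> S) * cre (x, \<sigma>) (ann (y, \<sigma>) \<Psi>) S))"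
    by (simp add: sum_distrib_left)
  also have "\<dots> = (\<Sum>x\<in>UNIV. \<Sum>y\<in>UNIV. \<Sum>\<sigma>\<in>UNIV. complex_of_real (t x y) * (\<Sum>S\<in>UNIV. cnj (ann (x, \<sigma>) \<Psi> S) * ann (y, \<sigma>) \<Psi> S))"
    unfolding adj_cre ..
  also have "\<dots> = (\<Sum>x\<in>UNIV. \<Sum>y\<in>UNIV. \<Sum>\<sigma>\<in>UNIV. \<Sum>S\<in>UNIV. complex_of_real (t x y) * (cnj (ann (x, \<sigma>) \<Psi> S) * ann (y, \<sigma>) \<Psi> S))"
    by (simp add: sum_distrib_left)
  also have "\<dots> = (\<Sum>S\<in>UNIV. \<Sum>x\<in>UNIV. \<Sum>y\<in>UNIV. \<Sum>\<sigma>\<in>UNIV. complex_of_real (t x y) * (cnj (ann (x, \<sigma>) \<Psi> S) * ann (y, \<sigma>) \<Psi> S))"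
    by (rule swap4)
  also have "\<dots> = (\<Sum>\<sigma>\<in>UNIV. \<Sum>S\<in>UNIV. \<Sum>x\<in>UNIV. \<Sum>y\<in>UNIV. complex_of_real (t x y) * (cnj (ann (x, \<sigma>) \<Psi> S) * ann (y, \<sigma>) \<Psi> S))"
    by (rule swap4)
  finally show ?thesis .
qed

lemma num_inner:
  fixes \<Psi> :: "'x::{finite,linorder} fock"
  shows "(\<Sum>S\<in>UNIV. cnj (\<Psi> S) * Nop \<Psi> S) =
    (\<Sum>\<sigma>\<in>UNIV. \<Sum>S\<in>UNIV. \<Sum>x\<in>UNIV. cnj (ann (x, \<sigma>) \<Psi> S) * ann (x, \<sigma>) \<Psi> S)"
proof -
  have "(\<Sum>S\<in>UNIV. cnj (\<Psi> S) * Nop \<Psi> S) =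
     (\<Sum>S\<in>UNIV. \<Sum>x\<in>UNIV. \<Sum>\<sigma>\<in>UNIV. cnj (\<Psi> S) * cre (x, \<sigma>) (ann (x, \<sigma>) \<Psi>) S)"
    unfolding Nop_def numop_def by (simp add: sum_distrib_left)
  also have "\<dots> = (\<Sum>x\<in>UNIV. \<Sum>\<sigma>\<in>UNIV. \<Sum>S\<in>UNIV. cnj (\<Psi> S) * cre (x, \<sigma>) (ann (x, \<sigma>) \<Psi>) S)"
  proof -
    have "(\<Sum>S\<in>UNIV. \<Sum>x\<in>UNIV. \<Sum>\<sigma>\<in>UNIV. cnj (\<Psi> S) * cre (x, \<sigma>) (ann (x, \<sigma>) \<Psi>) S)
        = (\<Sum>x\<in>UNIV. \<Sum>S\<in>UNIV. \<Sum>\<sigma>\<in>UNIV. cnj (\<Psi> S) * cre (x, \<sigma>) (ann (x, \<sigma>) \<Psi>) S)"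
      by (rule sum.swap)
    also have "\<dots> = (\<Sum>x\<in>UNIV. \<Sum>\<sigma>\<in>UNIV. \<Sum>S\<in>UNIV. cnj (\<Psi> S) * cre (x, \<sigma>) (ann (x, \<sigma>) \<Psi>) S)"
      by (intro sum.cong refl sum.swap)
    finally show ?thesis .
  qed
  also have "\<dots> = (\<Sum>x\<in>UNIV. \<Sum>\<sigma>\<in>UNIV. \<Sum>S\<in>UNIV. cnj (ann (x, \<sigma>) \<Psi> S) * ann (x, \<sigma>) \<Psi> S)"
    unfolding adj_cre ..
  also have "\<dots> = (\<Sum>\<sigma>\<in>UNIV. \<Sum>x\<in>UNIV. \<Sum>S\<in>UNIV. cnj (ann (x, \<sigma>) \<Psi> S) * ann (x, \<sigma>) \<Psi> S)"
    by (rule sum.swap)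
  also have "\<dots> = (\<Sum>\<sigma>\<in>UNIV. \<Sum>S\<in>UNIV. \<Sum>x\<in>UNIV. cnj (ann (x, \<sigma>) \<Psi> S) * ann (x, \<sigma>) \<Psi> S)"
    by (intro sum.cong refl sum.swap)
  finally show ?thesis .
qed

lemma Re_cnj_mult: "Re (cnj z * z) = Re z * Re z + Im z * Im z"
  by simp

lemma lower_bound:
  fixes t :: "'x::{finite,linorder} \<Rightarrow> 'x \<Rightarrow> real" and U :: "'x \<Rightarrow> real" and \<Psi> :: "'x fock"
  assumes sym: "\<forall>x y. t x y = t y x" and U_pos: "\<forall>x. U x > 0" and mine: "is_min_eigval t e"
    and nz: "\<exists>S. \<Psi> S \<noteq> 0" and N: "Nop \<Psi> = (\<lambda>S. of_nat Ne * \<Psi> S)"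
    and H: "Ham t U \<Psi> = (\<lambda>S. complex_of_real E * \<Psi> S)"
  shows "real Ne * e \<le> E"
proof -
  define n2 where "n2 = (\<Sum>S\<in>UNIV. Re (cnj (\<Psi> S) * \<Psi> S))"
  obtain S0 where S0: "\<Psi> S0 \<noteq> 0" using nz by blast
  have n2pos: "n2 > 0" unfolding n2_def
  proof (rule sum_pos2[of UNIV S0])
    show "0 < Re (cnj (\<Psi> S0) * \<Psi> S0)"
      using S0 unfolding Re_cnj_mult by (metis complex_eqI sum_power2_gt_zero_iff power2_eq_square zero_complex.simps)
  qed (auto simp: Re_cnj_mult)
  have HE: "Re (\<Sum>S\<in>UNIV. cnj (\<Psi> S) * Ham t U \<Psi> S) = E * n2"
    unfolding H n2_def by (simp add: sum_distrib_left algebra_simps)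
  have Hsplit: "Re (\<Sum>S\<in>UNIV. cnj (\<Psi> S) * Ham t U \<Psi> S) =
      Re (\<Sum>S\<in>UNIV. cnj (\<Psi> S) * Hhop t \<Psi> S) + Re (\<Sum>S\<in>UNIV. cnj (\<Psi> S) * Hint U \<Psi> S)"
    unfolding Ham_def by (simp add: distrib_left sum.distrib)
  have int0: "Re (\<Sum>S\<in>UNIV. cnj (\<Psi> S) * Hint U \<Psi> S) \<ge> 0"
    unfolding Hint_eq Re_sum
  proof (intro sum_nonneg)
    fix S
    have "Re (cnj (\<Psi> S) * (\<Sum>x\<in>UNIV. complex_of_real (U x) * (if (x, Up) \<in> S \<and> (x, Down) \<in> S then \<Psi> S else 0)))
        = (\<Sum>x\<in>UNIV. U x * (if (x, Up) \<in> S \<and> (x, Down) \<in> S then Re (cnj (\<Psi> S) * \<Psi> S) else 0))"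
      by (simp add: sum_distrib_left Re_sum mult_if0 if_distrib algebra_simps cong: if_cong)
    also have "\<dots> \<ge> 0" using U_pos by (intro sum_nonneg) (auto simp: Re_cnj_mult less_imp_le)
    finally show "0 \<le> Re (cnj (\<Psi> S) * (\<Sum>x\<in>UNIV. complex_of_real (U x) * (if (x, Up) \<in> S \<and> (x, Down) \<in> S then \<Psi> S else 0)))" .
  qed
  have hop: "Re (\<Sum>S\<in>UNIV. cnj (\<Psi> S) * Hhop t \<Psi> S) \<ge> e * Re (\<Sum>S\<in>UNIV. cnj (\<Psi> S) * Nop \<Psi> S)"
  proof -
    have "e * Re (\<Sum>S\<in>UNIV. cnj (\<Psi> S) * Nop \<Psi> S) =
        (\<Sum>\<sigma>\<in>UNIV. \<Sum>S\<in>UNIV. e * (\<Sum>x\<in>UNIV. Re (cnj (ann (x, \<sigma>) \<Psi> S) * ann (x, \<sigma>) \<Psi> S)))"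
      unfolding num_inner by (simp add: Re_sum sum_distrib_left)
    also have "\<dots> \<le> (\<Sum>\<sigma>\<in>UNIV. \<Sum>S\<in>UNIV. Re (\<Sum>x\<in>UNIV. \<Sum>y\<in>UNIV. complex_of_real (t x y) * (cnj (ann (x, \<sigma>) \<Psi> S) * ann (y, \<sigma>) \<Psi> S)))"
      by (intro sum_mono quad_lower_complex[OF sym mine])
    also have "\<dots> = Re (\<Sum>S\<in>UNIV. cnj (\<Psi> S) * Hhop t \<Psi> S)"
      unfolding hop_inner by (simp only: Re_sum)
    finally show ?thesis .
  qed
  have "Re (\<Sum>S\<in>UNIV. cnj (\<Psi> S) * Nop \<Psi> S) = real Ne * n2"
    unfolding N n2_def by (simp add: sum_distrib_left algebra_simps)
  then have "E * n2 \<ge> (real Ne * e) * n2" using HE Hsplit int0 hop by (simp add: algebra_simps)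
  then show ?thesis using n2pos by simp
qed



theorem lemma3p1:
  fixes t :: "'x::{finite,linorder} \<Rightarrow> 'x \<Rightarrow> real"
    and U :: "'x \<Rightarrow> real"
    and \<epsilon>0 :: real
    and \<phi> :: "'v::{finite,linorder} \<Rightarrow> 'x \<Rightarrow> real"
    and A :: "'v set" and Ne :: nat and n :: nat
    and C :: "nat \<Rightarrow> 'v set" and m :: "nat \<Rightarrow> real"
  assumes t_sym: "\<forall>x y. t x y = t y x"
    and U_pos: "\<forall>x. U x > 0"
    and eps0: "is_min_eigval t \<epsilon>0"
    and basis: "is_basis_of \<phi> (eigspace t \<epsilon>0)"
    and Ne_le: "Ne \<le> card (UNIV :: 'v set)"
    and A_card: "card A = Ne"
    and C_inj: "inj_on C {..<n}"
    and C_comp: "C ` {..<n} = components \<phi> A"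
    and m_range: "\<forall>k<n. \<exists>j::nat. j \<le> card (C k) \<and> m k = real (card (C k)) / 2 - real j"
  shows "(\<exists>S. PhiAm \<phi> A n C m S \<noteq> 0)
       \<and> Nop (PhiAm \<phi> A n C m) = (\<lambda>S. of_nat Ne * PhiAm \<phi> A n C m S)
       \<and> Ham t U (PhiAm \<phi> A n C m) = (\<lambda>S. complex_of_real (real Ne * \<epsilon>0) * PhiAm \<phi> A n C m S)
       \<and> (\<forall>(E::real) \<Psi>. (\<exists>S. \<Psi> S \<noteq> 0) \<longrightarrow> Nop \<Psi> = (\<lambda>S. of_nat Ne * \<Psi> S)
            \<longrightarrow> Ham t U \<Psi> = (\<lambda>S. complex_of_real E * \<Psi> S) \<longrightarrow> real Ne * \<epsilon>0 \<le> E)"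
proof -
  define L where "L = (\<lambda>k. Lam \<phi> (C k))"
  define J where "J = (\<lambda>k. nat \<lfloor>real (card (C k)) / 2 - m k\<rfloor>)"
  define us where "us = sorted_list_of_set A"
  define \<Psi>A where "\<Psi>A = foldr (\<lambda>u. adag \<phi> u Up) us vac"
  define \<Phi> where "\<Phi> = PhiAm \<phi> A n C m"
  have finA: "finite A" by simp
  have us: "distinct us" "set us = A" "length us = Ne" unfolding us_def using finA A_card by auto
  have PsiA_eq: "PsiA \<phi> A = \<Psi>A" unfolding PsiA_def \<Psi>A_def us_def ..
  have Phi_eq: "\<Phi> = foldr (\<lambda>k. Sminus_set (L k) ^^ J k) [0..<n] \<Psi>A"
    unfolding \<Phi>_def PhiAm_def PsiA_eq L_def J_def ..
  have comps: "C k \<in> components \<phi> A" if "k < n" for k using C_comp that by blast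
  have CA: "C k \<subseteq> A" if "k < n" for k using comp_sub[OF comps[OF that]] .
  have H: "\<forall>k<n. \<forall>u\<in>A. \<forall>x. \<phi> u x \<noteq> 0 \<longrightarrow> (x \<in> L k \<longleftrightarrow> u \<in> C k)"
  proof (intro allI impI ballI)
    fix k u x assume k: "k < n" and u: "u \<in> A" and ux: "\<phi> u x \<noteq> 0"
    show "(x \<in> L k) = (u \<in> C k)"
    proof
      assume "x \<in> L k" then show "u \<in> C k" using comp_prop[OF comps[OF k] u ux] L_def by simp
    next
      assume "u \<in> C k" then show "x \<in> L k" using ux unfolding L_def Lam_def by blast
    qed
  qed
  have disj: "L k \<inter> L l = {}" if "k < n" "l < n" "k \<noteq> l" for k l
  proof (rule ccontr)
    assume "L k \<inter> L l \<noteq> {}"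
    then obtain x where x: "x \<in> L k" "x \<in> L l" by blast
    then obtain v where v: "v \<in> C l" "\<phi> v x \<noteq> 0" unfolding L_def Lam_def by blast
    have vA: "v \<in> A" using v CA[OF that(2)] by blast
    have "v \<in> C k" using H[rule_format, OF that(1) vA v(2)] x(1) by simp
    then have ckl: "C k = C l" using comp_eq[OF comps[OF that(1)] comps[OF that(2)] _ v(1)] by simp
    have "k = l" by (rule inj_onD[OF C_inj ckl]) (use that in auto)
    then show False using that by simp
  qed
  have Jle: "J k \<le> card (C k)" if kn: "k < n" for k
  proof -
    obtain j :: nat where j: "j \<le> card (C k)" "m k = real (card (C k)) / 2 - real j"
      using m_range[rule_format, OF kn] by blast
    have e: "real (card (C k)) / 2 - m k = real j" using j(2) by linarith
    have "J k = j" unfolding J_def by (simp only: e floor_of_nat nat_int)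
    then show ?thesis using j by simp
  qed
  have indep: "\<forall>c. (\<forall>x. (\<Sum>u\<in>UNIV. c u * \<phi> u x) = 0) \<longrightarrow> (\<forall>u. c u = 0)"
    using basis unfolding is_basis_of_def by blast
  obtain \<psi> where dual: "\<forall>u v. ip (\<psi> v) (\<phi> u) = (if u = v then 1 else 0)"
    using dual_exists[OF indep] by blast
  have PsiA_nz: "\<exists>S. \<Psi>A S \<noteq> 0" using psi_nz[OF dual us(1)] unfolding \<Psi>A_def by blast
  have PsiA_supp: "\<Psi>A S \<noteq> 0 \<Longrightarrow> (\<forall>p\<in>S. snd p) \<and> card S = Ne \<and>
     (\<forall>k<n. card {x \<in> L k. (x, Up) \<in> S} = card (C k))" for S
  proof -
    assume "\<Psi>A S \<noteq> 0"
    then have "(\<forall>p\<in>S. snd p) \<and> card S = length us \<and>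
     (\<forall>k<n. card {x \<in> Lam \<phi> (C k). (x, Up) \<in> S} = card (set us \<inter> C k))"
      using psi_supp[of n A \<phi> C, OF H[unfolded L_def] us(1)] us(2) unfolding \<Psi>A_def by blast
    moreover have "set us \<inter> C k = C k" if "k < n" for k using CA[OF that] us(2) by blast
    ultimately show ?thesis using us(3) unfolding L_def by simp
  qed
  have base: "\<forall>S. \<Psi>A S \<noteq> 0 \<longrightarrow> downs S = {}"
    using PsiA_supp unfolding downs_def by fastforce
  have formula: "\<Phi> S = (if nodouble S \<and> downs S \<subseteq> (\<Union>k\<in>set [0..<n]. L k) \<and> (\<forall>k\<in>set [0..<n]. card (downs S \<inter> L k) = J k)
     then (\<Prod>k\<in>set [0..<n]. of_nat (fact (J k))) * \<Psi>A (upL UNIV S) else 0)" for S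
    unfolding Phi_eq by (rule foldr_formula) (use disj base in auto)
  have supp: "\<Phi> S \<noteq> 0 \<Longrightarrow> nodouble S \<and> \<Psi>A (upL UNIV S) \<noteq> 0" for S
    using formula[of S] by (auto split: if_splits)
  have part1: "\<exists>S. \<Phi> S \<noteq> 0"
  proof -
    obtain S0 where S0: "\<Psi>A S0 \<noteq> 0" using PsiA_nz by blast
    note S0s = PsiA_supp[OF S0]
    define X where "X = (\<lambda>k. {x \<in> L k. (x, Up) \<in> S0})"
    have "\<forall>k\<in>{..<n}. \<exists>D. D \<subseteq> X k \<and> card D = J k"
    proof
      fix k assume k': "k \<in> {..<n}"
      then have k: "k < n" by simp
      have "card (X k) = card (C k)" using S0s k unfolding X_def by blast
      then have "J k \<le> card (X k)" using Jle[OF k] by simp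
      then obtain D where "D \<subseteq> X k" "card D = J k" by (rule obtain_subset_with_card_n)
      then show "\<exists>D. D \<subseteq> X k \<and> card D = J k" by blast
    qed
    from bchoice[OF this] obtain D where D0: "\<forall>k\<in>{..<n}. D k \<subseteq> X k \<and> card (D k) = J k" by (elim exE)
    have D: "\<forall>k<n. D k \<subseteq> X k \<and> card (D k) = J k"
    proof (intro allI impI)
      fix k assume "k < n"
      then have "k \<in> {..<n}" by simp
      then show "D k \<subseteq> X k \<and> card (D k) = J k" by (rule bspec[OF D0])
    qed
    define DA where "DA = (\<Union>k\<in>{..<n}. D k)"
    define S1 where "S1 = (\<lambda>(x, b). (x, x \<notin> DA)) ` S0"
    have allT: "\<forall>p\<in>S0. snd p" using S0s by (elim conjE)
    have memS0: "c" if "(y, c) \<in> S0" for y c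
      using allT that by fastforce
    have memS1: "((y, c) \<in> S1) = ((y, True) \<in> S0 \<and> c = (y \<notin> DA))" for y c
    proof
      assume "(y, c) \<in> S1"
      then obtain y' b where "(y', b) \<in> S0" "(y, c) = (y', y' \<notin> DA)" unfolding S1_def by auto
      then show "(y, True) \<in> S0 \<and> c = (y \<notin> DA)" using memS0[of y' b] by auto
    next
      assume a: "(y, True) \<in> S0 \<and> c = (y \<notin> DA)"
      then have e: "(y, c) = (\<lambda>(x, b). (x, x \<notin> DA)) (y, True)" by simp
      show "(y, c) \<in> S1" unfolding S1_def by (rule image_eqI[where f="\<lambda>(x, b). (x, x \<notin> DA)" and x="(y, True)", OF e conjunct1[OF a]])
    qed
    have nd: "nodouble S1" unfolding nodouble_def memS1 by auto
    have DAsub: "DA \<subseteq> {y. (y, True) \<in> S0}" unfolding DA_def using D unfolding X_def by fastforce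
    have dS1: "downs S1 = DA" unfolding downs_def memS1 using DAsub by auto
    have DAL: "DA \<subseteq> (\<Union>k\<in>set [0..<n]. L k)" unfolding DA_def using D unfolding X_def by fastforce
    have cardk: "card (downs S1 \<inter> L k) = J k" if k: "k \<in> set [0..<n]" for k
    proof -
      have kn: "k < n" using k by simp
      have "DA \<inter> L k = D k"
      proof
        show "D k \<subseteq> DA \<inter> L k" using D kn unfolding DA_def X_def by auto
        show "DA \<inter> L k \<subseteq> D k"
        proof
          fix x assume x: "x \<in> DA \<inter> L k"
          then obtain l where l: "l < n" "x \<in> D l" unfolding DA_def by blast
          then have "x \<in> L l" using D unfolding X_def by blast
          then have "l = k" using disj[OF kn l(1)] x by blast
          then show "x \<in> D k" using l by simp
        qed
      qed
      then show ?thesis using dS1 D kn by simp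
    qed
    have up: "upL UNIV S1 = S0"
    proof -
      have "\<forall>y c. ((y, c) \<in> upL UNIV S1) = ((y, c) \<in> S0)"
      proof (intro allI)
        fix y c
        show "((y, c) \<in> upL UNIV S1) = ((y, c) \<in> S0)"
          unfolding mem_upL memS1 using memS0[of y c] by (cases c) auto
      qed
      then show ?thesis by (simp add: set_eq_iff split_paired_All)
    qed
    have prod_nz: "(\<Prod>k\<in>set [0..<n]. (of_nat (fact (J k)) :: complex)) \<noteq> 0"
      by (subst prod_zero_iff) auto
    have "\<Phi> S1 = (\<Prod>k\<in>set [0..<n]. of_nat (fact (J k))) * \<Psi>A S0"
      using formula[of S1] nd dS1 DAL cardk up by simp
    then have "\<Phi> S1 \<noteq> 0" using prod_nz S0 by simp
    then show ?thesis by blast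
  qed
  have card_eq: "\<Phi> S \<noteq> 0 \<Longrightarrow> card S = Ne" for S
  proof -
    assume a: "\<Phi> S \<noteq> 0"
    then have nd: "nodouble S" and p: "\<Psi>A (upL UNIV S) \<noteq> 0" using supp by auto
    have same: "b1 = b2" if "(x, b1) \<in> S" "(x, b2) \<in> S" for x b1 b2
      using nd that unfolding nodouble_def by (cases b1; cases b2) auto
    have "inj_on (\<lambda>(x, b). (x, b \<or> x \<in> (UNIV :: 'x set))) S"
    proof (rule inj_onI)
      fix p q assume p: "p \<in> S" and q: "q \<in> S"
        and e: "(\<lambda>(x, b). (x, b \<or> x \<in> (UNIV :: 'x set))) p = (\<lambda>(x, b). (x, b \<or> x \<in> (UNIV :: 'x set))) q"
      obtain a b where pa: "p = (a, b)" by (cases p)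
      obtain a' b' where qa: "q = (a', b')" by (cases q)
      have "a = a'" using e pa qa by simp
      then show "p = q" using same[of a b b'] p q pa qa by simp
    qed
    then have "card (upL UNIV S) = card S" unfolding upL_def by (rule card_image)
    then show ?thesis using PsiA_supp[OF p] by simp
  qed
  have part2: "Nop \<Phi> = (\<lambda>S. of_nat Ne * \<Phi> S)"
  proof (rule ext)
    fix S show "Nop \<Phi> S = of_nat Ne * \<Phi> S"
      using card_eq[of S] unfolding Nop_eq by (cases "\<Phi> S = 0") auto
  qed
  have eig: "\<forall>u. \<phi> u \<in> eigspace t \<epsilon>0" using basis unfolding is_basis_of_def by blast
  have good: "Good \<phi> A \<Phi>"
    unfolding Phi_eq \<Psi>A_def
    by (rule good_foldr_S[where C=C], rule good_foldr_adag) (use us(2) H in auto)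
  have hint0: "Hint U \<Phi> S = 0" for S
  proof (cases "\<Phi> S = 0")
    case True
    then show ?thesis unfolding Hint_eq by (simp cong: if_cong)
  next
    case False
    then have "nodouble S" using supp by blast
    then show ?thesis unfolding Hint_eq nodouble_def by (intro sum.neutral ballI) auto
  qed
  have part3: "Ham t U \<Phi> = (\<lambda>S. complex_of_real (real Ne * \<epsilon>0) * \<Phi> S)"
  proof (rule ext)
    fix S
    show "Ham t U \<Phi> S = complex_of_real (real Ne * \<epsilon>0) * \<Phi> S"
      unfolding Ham_def Hhop_good[OF eig good] hint0 part2 by simp
  qed
  have part4: "\<forall>(E::real) \<Psi>. (\<exists>S. \<Psi> S \<noteq> 0) \<longrightarrow> Nop \<Psi> = (\<lambda>S. of_nat Ne * \<Psi> S)
            \<longrightarrow> Ham t U \<Psi> = (\<lambda>S. complex_of_real E * \<Psi> S) \<longrightarrow> real Ne * \<epsilon>0 \<le> E"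
    using lower_bound[OF t_sym U_pos eps0] by blast
  show ?thesis using part1 part2 part3 part4 unfolding \<Phi>_def by blast
qed


end
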